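(* Let $n\geq 3$, $0<q<n-2$, and let $\Omega$ be an open bounded convex domain in $\mathbb R^n$. Let $u\in C^{\infty}(\Omega)\cap C(\overline{\Omega})$ be a nonzero convex solution of $$\det D^2 u = |u|^{q}\ \text{in } \Omega,\qquad u=0\ \text{on } \partial\Omega.$$ Then for every $\beta\in\left(0,\frac{2}{n-q}\right)$ we have $u\in C^{0,\beta}(\overline{\Omega})$, and there is a constant $C$ depending only on $n,q,\beta$ and $\mathrm{diam}(\Omega)$ such that $$|u(x)|\leq C\,[\mathrm{dist}(x,\partial\Omega)]^{\beta}\quad\text{for all } x\in\Omega.$$
   Context: $\mathrm{dist}(x,\partial\Omega)$ is the Euclidean distance from $x$ to $\partial\Omega$ and $\mathrm{diam}(\Omega)$ is the diameter of $\Omega$. *)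

theory Defs
  imports "HOL-Analysis.Analysis"
begin

fun iter_partial :: "'n::finite list \<Rightarrow> (real^'n \<Rightarrow> real) \<Rightarrow> real^'n \<Rightarrow> real" where
  "iter_partial [] f = f"
| "iter_partial (i # is) f = (\<lambda>x. frechet_derivative (iter_partial is f) (at x) (axis i 1))"

definition smooth_on :: "(real^'n::finite) set \<Rightarrow> (real^'n \<Rightarrow> real) \<Rightarrow> bool" where
  "smooth_on S f \<longleftrightarrow> (\<forall>is. continuous_on S (iter_partial is f) \<and>
      (\<forall>x\<in>S. iter_partial is f differentiable (at x)))"

definition hessian :: "(real^'n::finite \<Rightarrow> real) \<Rightarrow> real^'n \<Rightarrow> real^'n^'n" where
  "hessian f x = (\<chi> i j. iter_partial [i, j] f x)"

definition holder_space :: "real \<Rightarrow> ('a::metric_space) set \<Rightarrow> ('a \<Rightarrow> real) \<Rightarrow> bool" where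
  "holder_space \<beta> S f \<longleftrightarrow> bounded (f ` S) \<and>
     (\<exists>L. \<forall>x\<in>S. \<forall>y\<in>S. \<bar>f x - f y\<bar> \<le> L * dist x y powr \<beta>)"

end

theory Submission
  imports Defs
begin



definition qf :: "real^'n^'n \<Rightarrow> real^'n \<Rightarrow> real" where
  "qf M v = (\<Sum>j\<in>UNIV. \<Sum>k\<in>UNIV. v$j * M$j$k * v$k)"

lemma qf_inner: "v \<bullet> (M *v v) = qf M v"
  by (simp add: qf_def inner_vec_def matrix_vector_mult_def sum_distrib_left mult.assoc)

definition elim_inv :: "'n::finite set \<Rightarrow> ('n \<Rightarrow> real) \<Rightarrow> real^'n^'n \<Rightarrow> bool" where
  "elim_inv S d M \<longleftrightarrow> (\<forall>i\<in>S. \<forall>j. j \<noteq> i \<longrightarrow> M$i$j = 0 \<and> M$j$i = 0) \<and>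
     (\<forall>i\<in>S. M$i$i \<ge> d i) \<and>
     (\<forall>v. (\<forall>i\<in>S. v$i = 0) \<longrightarrow> qf M v \<ge> (\<Sum>i\<in>UNIV. d i * (v$i)^2))"

lemma det_E1:
  fixes c :: "'n::finite \<Rightarrow> real"
  shows "det ((\<chi> j k. (if j = k then 1 else 0) - (if j = i0 \<and> k \<noteq> i0 then c k else 0)) :: real^'n^'n) = 1"
proof -
  let ?A = "mat 1 :: real^'n^'n"
  let ?x = "(\<Sum>k\<in>UNIV - {i0}. (- c k) *s row k ?A)"
  have x: "?x \<in> vec.span {row j ?A |j. j \<noteq> i0}"
    by (intro vec.span_sum vec.span_scale vec.span_base) auto
  have eq: "(\<chi> k. if k = i0 then row i0 ?A + ?x else row k ?A) =
     ((\<chi> j k. (if j = k then 1 else 0) - (if j = i0 \<and> k \<noteq> i0 then c k else 0)) :: real^'n^'n)"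
  proof -
    have r: "row k ?A = axis k 1" for k
      by (simp add: row_def mat_def axis_def vec_eq_iff)
    have "?x $ m = (if m = i0 then 0 else - c m)" for m
      by (simp add: r sum_component axis_def if_distrib cong: if_cong) 
    then show ?thesis by (simp add: vec_eq_iff r axis_def)
  qed
  show ?thesis using det_row_span[OF x] eq by simp
qed




lemma EM_entry:
  fixes M :: "real^'n::finite^'n"
  shows "(((\<chi> j l. (if j = l then 1 else 0) - (if l = i0 \<and> j \<noteq> i0 then c j else 0)) :: real^'n^'n) ** M)$j$k
     = M$j$k - (if j \<noteq> i0 then c j * M$i0$k else 0)"
  by (simp add: matrix_matrix_mult_def left_diff_distrib sum_subtractf if_distrib[where f="\<lambda>x. x * _"] cong: if_cong)

lemma MF_entry:
  fixes M :: "real^'n::finite^'n"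
  shows "(M ** ((\<chi> l k. (if l = k then 1 else 0) - (if l = i0 \<and> k \<noteq> i0 then b k else 0)) :: real^'n^'n))$j$k
     = M$j$k - (if k \<noteq> i0 then M$j$i0 * b k else 0)"
  by (simp add: matrix_matrix_mult_def right_diff_distrib sum_subtractf if_distrib[where f="\<lambda>x. _ * x"] cong: if_cong)




lemma delta_mult1[simp]: "(if P then 1 else 0) * (x::real) = (if P then x else 0)" by simp
lemma delta_mult2[simp]: "(x::real) * (if P then 1 else 0) = (if P then x else 0)" by simp

lemma delta_mult3[simp]: "(if P then x else 0) * (y::real) = (if P then x * y else 0)" by simp
lemma sum_if_cond: "(\<Sum>k\<in>A. if P then f k else (0::real)) = (if P then (\<Sum>k\<in>A. f k) else 0)" by simp

lemma qf_axis: "qf M (axis i 1) = M$i$i"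
  by (simp add: qf_def axis_def)

lemma sumsq_axis: "(\<Sum>j\<in>UNIV. d j * ((axis i (1::real))$j)^2) = d i"
proof -
  have "(\<Sum>j\<in>UNIV. d j * ((axis i (1::real))$j)^2) = (\<Sum>j\<in>UNIV. if j = i then d i else 0)"
    by (rule sum.cong) (auto simp: axis_def)
  then show ?thesis by simp
qed

lemma qf_add_axis:
  fixes M :: "real^'n::finite^'n"
  assumes "v$i0 = 0"
  shows "qf M (v + t *s axis i0 1) = qf M v + t * ((\<Sum>k\<in>UNIV. M$i0$k * v$k) + (\<Sum>j\<in>UNIV. v$j * M$j$i0)) + t^2 * M$i0$i0"
proof -
  have "qf M (v + t *s axis i0 1) = (\<Sum>j\<in>UNIV. \<Sum>k\<in>UNIV. (v$j + t * (if j = i0 then 1 else 0)) * M$j$k * (v$k + t * (if k = i0 then 1 else 0)))"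
    by (simp add: qf_def axis_def)
  also have "\<dots> = (\<Sum>j\<in>UNIV. \<Sum>k\<in>UNIV. v$j * M$j$k * v$k)
      + t * (\<Sum>j\<in>UNIV. \<Sum>k\<in>UNIV. (if j = i0 then 1 else 0) * M$j$k * v$k)
      + t * (\<Sum>j\<in>UNIV. \<Sum>k\<in>UNIV. v$j * M$j$k * (if k = i0 then 1 else 0))
      + t^2 * (\<Sum>j\<in>UNIV. \<Sum>k\<in>UNIV. (if j = i0 then 1 else 0) * M$j$k * (if k = i0 then 1 else 0))"
    by (simp only: algebra_simps sum.distrib sum_distrib_left power2_eq_square)
  also have "(\<Sum>j\<in>UNIV. \<Sum>k\<in>UNIV. (if j = i0 then 1 else 0) * M$j$k * v$k) = (\<Sum>k\<in>UNIV. M$i0$k * v$k)"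
    by (simp add: sum_if_cond)
  also have "(\<Sum>j\<in>UNIV. \<Sum>k\<in>UNIV. v$j * M$j$k * (if k = i0 then 1 else 0)) = (\<Sum>j\<in>UNIV. v$j * M$j$i0)"
    by simp
  also have "(\<Sum>j\<in>UNIV. \<Sum>k\<in>UNIV. (if j = i0 then 1 else 0) * M$j$k * (if k = i0 then 1 else 0)) = M$i0$i0"
    by (simp add: sum_if_cond)
  finally show ?thesis by (simp add: qf_def algebra_simps)
qed

lemma sumsq_add_axis:
  fixes v :: "real^'n::finite"
  assumes "v$i0 = 0"
  shows "(\<Sum>j\<in>UNIV. d j * ((v + t *s axis i0 1)$j)^2) = (\<Sum>j\<in>UNIV. d j * (v$j)^2) + d i0 * t^2"
proof -
  have "(\<Sum>j\<in>UNIV. d j * ((v + t *s axis i0 1)$j)^2) = (\<Sum>j\<in>UNIV. d j * (v$j)^2 + (if j = i0 then d i0 * t^2 else 0))"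
    by (rule sum.cong) (auto simp: axis_def assms)
  then show ?thesis by (simp add: sum.distrib)
qed

lemma schur_ineq:
  fixes a d Q X Y :: real
  assumes "a \<ge> d" "d > 0" "\<And>t. Q + t * (X + Y) + t^2 * a \<ge> d * t^2"
  shows "Q \<ge> X * Y / a"
proof -
  have a: "a > 0" using assms by linarith
  define t0 where "t0 = -(X+Y)/(2*a)"
  have "Q + t0 * (X + Y) + t0^2 * a \<ge> d * t0^2" by (rule assms(3))
  moreover have "Q + t0 * (X + Y) + t0^2 * a - d * t0^2 = Q - (X+Y)^2 * (a + d) / (4 * a^2)"
    using a unfolding t0_def by (simp add: field_simps power2_eq_square)
  ultimately have h: "Q - (X+Y)^2 * (a + d) / (4 * a^2) \<ge> 0" by linarith
  have "X * Y / a \<le> (X+Y)^2 * (a + d) / (4 * a^2)"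
  proof (cases "X * Y \<ge> 0")
    case True
    have "X * Y * (4*a) \<le> (X+Y)^2 * (a+d)"
    proof -
      have "(X+Y)^2 - 4*(X*Y) = (X-Y)^2" by (simp add: power2_eq_square algebra_simps)
      then have "4 * (X*Y) \<le> (X+Y)^2" using zero_le_power2[of "X-Y"] by linarith
      then have "4 * (X*Y) * a \<le> (X+Y)^2 * a" using a by (intro mult_right_mono) auto
      moreover have "(X+Y)^2 * a \<le> (X+Y)^2 * (a+d)" using assms by (intro mult_left_mono) auto
      ultimately show ?thesis by (simp add: algebra_simps)
    qed
    then show ?thesis using a by (simp add: field_simps power2_eq_square)
  next
    case False
    then have "X * Y / a \<le> 0" using a by (simp add: divide_nonpos_pos)
    moreover have "(X+Y)^2 * (a + d) / (4 * a^2) \<ge> 0" using a assms by simp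
    ultimately show ?thesis by linarith
  qed
  with h show ?thesis by linarith
qed




lemma elim_step:
  fixes M :: "real^'n::finite^'n"
  assumes inv: "elim_inv S d M" and i0: "i0 \<notin> S" and dpos: "\<And>i. d i > 0"
  shows "\<exists>M'. elim_inv (insert i0 S) d M' \<and> det M' = det M"
proof -
  define a where "a = M$i0$i0"
  have zr: "\<And>i j. i \<in> S \<Longrightarrow> j \<noteq> i \<Longrightarrow> M$i$j = 0 \<and> M$j$i = 0"
    and dg: "\<And>i. i \<in> S \<Longrightarrow> M$i$i \<ge> d i"
    and qv: "\<And>v. (\<forall>i\<in>S. v$i = 0) \<Longrightarrow> qf M v \<ge> (\<Sum>i\<in>UNIV. d i * (v$i)^2)"
    using inv unfolding elim_inv_def by blast+
  have "qf M (axis i0 1) \<ge> (\<Sum>i\<in>UNIV. d i * ((axis i0 (1::real))$i)^2)"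
    using i0 by (intro qv) (auto simp: axis_def)
  then have ad: "a \<ge> d i0" by (simp add: qf_axis sumsq_axis a_def)
  have apos: "a > 0" using ad dpos[of i0] by linarith
  define E :: "real^'n^'n" where "E = (\<chi> j l. (if j = l then 1 else 0) - (if l = i0 \<and> j \<noteq> i0 then M$j$i0 / a else 0))"
  define F :: "real^'n^'n" where "F = (\<chi> l k. (if l = k then 1 else 0) - (if l = i0 \<and> k \<noteq> i0 then M$i0$k / a else 0))"
  define M' :: "real^'n^'n" where "M' = (\<chi> j k. if j = i0 \<and> k = i0 then a else if j = i0 \<or> k = i0 then 0
        else M$j$k - M$j$i0 * M$i0$k / a)"
  have dF: "det F = 1" unfolding F_def by (rule det_E1)
  have "det (transpose E) = 1"
  proof -
    have "transpose E = (\<chi> j k. (if j = k then 1 else 0) - (if j = i0 \<and> k \<noteq> i0 then M$k$i0 / a else 0))"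
      unfolding E_def transpose_def by (simp add: vec_eq_iff eq_commute)
    then show ?thesis by (simp add: det_E1)
  qed
  then have dE: "det E = 1" by simp
  have EM: "(E ** M)$j$k = M$j$k - (if j \<noteq> i0 then M$j$i0 / a * M$i0$k else 0)" for j k
    unfolding E_def by (rule EM_entry)
  have "M' = (E ** M) ** F"
  proof -
    have "((E ** M) ** F)$j$k = M'$j$k" for j k
    proof -
      have "((E ** M) ** F)$j$k = (E ** M)$j$k - (if k \<noteq> i0 then (E ** M)$j$i0 * (M$i0$k / a) else 0)"
        unfolding F_def by (rule MF_entry)
      then show ?thesis using apos by (auto simp: EM M'_def a_def field_simps)
    qed
    then show ?thesis by (simp add: vec_eq_iff)
  qed
  then have detM': "det M' = det M" by (simp add: det_mul dE dF)
  have "elim_inv (insert i0 S) d M'"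
    unfolding elim_inv_def
  proof (intro conjI ballI allI impI)
    fix i j assume i: "i \<in> insert i0 S" and ji: "j \<noteq> i"
    show "M'$i$j = 0" "M'$j$i = 0"
      using i ji zr by (auto simp: M'_def)
  next
    fix i assume i: "i \<in> insert i0 S"
    show "M'$i$i \<ge> d i"
      using i ad dg i0 zr by (auto simp: M'_def)
  next
    fix v :: "real^'n" assume v: "\<forall>i\<in>insert i0 S. v$i = 0"
    define X where "X = (\<Sum>k\<in>UNIV. M$i0$k * v$k)"
    define Y where "Y = (\<Sum>j\<in>UNIV. v$j * M$j$i0)"
    have vi0: "v$i0 = 0" using v by auto
    have q1: "qf M' v = qf M v - Y * X / a"
    proof -
      have "qf M' v = (\<Sum>j\<in>UNIV. \<Sum>k\<in>UNIV. v$j * M$j$k * v$k - (v$j * M$j$i0) * (M$i0$k * v$k) / a)"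
        unfolding qf_def by (intro sum.cong refl) (auto simp: M'_def vi0 algebra_simps)
      also have "\<dots> = qf M v - Y * X / a"
        by (simp add: qf_def X_def Y_def sum_subtractf sum_product sum_divide_distrib)
      finally show ?thesis .
    qed
    have "\<And>t. qf M v - (\<Sum>i\<in>UNIV. d i * (v$i)^2) + t * (X + Y) + t^2 * a \<ge> d i0 * t^2"
    proof -
      fix t
      have "qf M (v + t *s axis i0 1) \<ge> (\<Sum>i\<in>UNIV. d i * ((v + t *s axis i0 1)$i)^2)"
        using v i0 by (intro qv) (auto simp: axis_def)
      then show "qf M v - (\<Sum>i\<in>UNIV. d i * (v$i)^2) + t * (X + Y) + t^2 * a \<ge> d i0 * t^2"
        unfolding qf_add_axis[OF vi0] sumsq_add_axis[OF vi0] X_def Y_def a_def by linarith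
    qed
    from schur_ineq[OF ad dpos this] have "qf M v - (\<Sum>i\<in>UNIV. d i * (v$i)^2) \<ge> X * Y / a" .
    then show "qf M' v \<ge> (\<Sum>i\<in>UNIV. d i * (v$i)^2)" using q1 by (simp add: mult.commute)
  qed
  with detM' show ?thesis by blast
qed

lemma elim_all:
  fixes M :: "real^'n::finite^'n"
  assumes dpos: "\<And>i. d i > 0"
  shows "finite T \<Longrightarrow> elim_inv (UNIV - T) d M \<Longrightarrow> det M \<ge> prod d UNIV"
proof (induction T arbitrary: M rule: finite_induct)
  case empty
  then have zr: "\<And>i j. j \<noteq> i \<Longrightarrow> M$i$j = 0" and dg: "\<And>i. M$i$i \<ge> d i"
    unfolding elim_inv_def by auto
  have "det M = prod (\<lambda>i. M$i$i) UNIV" by (rule det_diagonal) (metis zr)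
  moreover have "prod d UNIV \<le> prod (\<lambda>i. M$i$i) UNIV"
    by (rule prod_mono) (use dpos dg less_imp_le in auto)
  ultimately show ?case by simp
next
  case (insert x F)
  have "x \<notin> UNIV - insert x F" by simp
  from elim_step[OF insert.prems(1) this dpos] obtain M' where
    "elim_inv (insert x (UNIV - insert x F)) d M'" "det M' = det M" by blast
  moreover have "insert x (UNIV - insert x F) = UNIV - F" using insert.hyps by auto
  ultimately show ?case using insert.IH by metis
qed

lemma det_ge_prod:
  fixes M :: "real^'n::finite^'n"
  assumes dpos: "\<And>i. d i > 0" and q: "\<And>v. qf M v \<ge> (\<Sum>i\<in>UNIV. d i * (v$i)^2)"
  shows "det M \<ge> prod d UNIV"
  by (rule elim_all[OF dpos, of UNIV]) (auto simp: elim_inv_def q)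




lemma det_lower_nu:
  fixes H :: "real^'n::finite^'n" and \<nu> :: "real^'n"
  assumes card: "CARD('n) \<ge> 2" and nu: "norm \<nu> = 1" and c1: "c1 > 0" and c2: "c2 > 0"
    and q: "\<And>v. v \<bullet> (H *v v) \<ge> c1 * ((norm v)^2 - (\<nu> \<bullet> v)^2) + c2 * (\<nu> \<bullet> v)^2"
  shows "det H \<ge> c1^(CARD('n) - 1) * c2"
proof -
  obtain k :: 'n where True by simp
  have nk: "norm (axis k (1::real)) = norm \<nu>" using nu by simp
  obtain f where f: "orthogonal_transformation f" "det (matrix f) = 1" "f (axis k 1) = \<nu>"
    using rotation_exists[OF card nk] by metis
  have lf: "linear f" using f(1) orthogonal_transformation_linear by blast
  define Q where "Q = matrix f"
  have Qv: "Q *v v = f v" for v unfolding Q_def using matrix_vector_mul(2)[OF lf] by metis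
  define M where "M = transpose Q ** H ** Q"
  define d where "d = (\<lambda>i. if i = k then c2 else c1)"
  have dpos: "\<And>i. d i > 0" using c1 c2 by (simp add: d_def)
  have "qf M v \<ge> (\<Sum>i\<in>UNIV. d i * (v$i)^2)" for v
  proof -
    have "qf M v = v \<bullet> (M *v v)" by (simp add: qf_inner)
    also have "\<dots> = (Q *v v) \<bullet> (H *v (Q *v v))"
    proof -
      have "M *v v = transpose Q *v (H *v (Q *v v))"
        unfolding M_def by (simp add: matrix_vector_mul_assoc matrix_mul_assoc)
      moreover have "v \<bullet> (transpose Q *v w) = (Q *v v) \<bullet> w" for w
        by (metis dot_lmul_matrix vector_transpose_matrix)
      ultimately show ?thesis by simp
    qed
    also have "\<dots> = f v \<bullet> (H *v f v)" by (simp add: Qv)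
    finally have e1: "qf M v = f v \<bullet> (H *v f v)" .
    have n1: "norm (f v) = norm v" using f(1) orthogonal_transformation_norm by blast
    have i1: "\<nu> \<bullet> f v = v$k"
    proof -
      have "\<nu> \<bullet> f v = f (axis k 1) \<bullet> f v" using f(3) by simp
      also have "\<dots> = axis k 1 \<bullet> v" using f(1) unfolding orthogonal_transformation_def by blast
      finally show ?thesis by (simp add: inner_axis')
    qed
    have nv: "(norm v)^2 = (\<Sum>i\<in>UNIV. (v$i)^2)"
      unfolding power2_norm_eq_inner inner_vec_def by (simp add: power2_eq_square)
    have "(\<Sum>i\<in>UNIV. d i * (v$i)^2) = c1 * ((\<Sum>i\<in>UNIV. (v$i)^2) - (v$k)^2) + c2 * (v$k)^2"
    proof -
      have "(\<Sum>i\<in>UNIV. d i * (v$i)^2) = (\<Sum>i\<in>UNIV. c1 * (v$i)^2 + (if i = k then (c2 - c1) * (v$k)^2 else 0))"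
        by (rule sum.cong) (auto simp: d_def algebra_simps)
      then show ?thesis by (simp add: sum.distrib sum_distrib_left algebra_simps)
    qed
    then show ?thesis using e1 q[of "f v"] n1 i1 nv by simp
  qed
  from det_ge_prod[OF dpos this] have "det M \<ge> prod d UNIV" .
  moreover have "det M = det H"
  proof -
    have "\<bar>det Q\<bar> = 1" unfolding Q_def using f(1) by simp
    then have "det Q = 1 \<or> det Q = -1" by linarith
    then have "det Q * det Q = 1" by auto
    then show ?thesis unfolding M_def by (simp add: det_mul algebra_simps)
  qed
  moreover have "prod d UNIV = c1^(CARD('n) - 1) * c2"
  proof -
    have "prod d UNIV = d k * prod d (UNIV - {k})"
      by (metis finite_class.finite_UNIV iso_tuple_UNIV_I prod.remove)
    also have "prod d (UNIV - {k}) = prod (\<lambda>_. c1) (UNIV - {k})"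
      by (rule prod.cong) (auto simp: d_def)
    also have "\<dots> = c1 ^ (CARD('n) - 1)" by (simp add: card_Diff_singleton)
    finally show ?thesis by (simp add: d_def mult.commute)
  qed
  ultimately show ?thesis by simp
qed





lemma second_order_1d:
  fixes f f1 :: "real \<Rightarrow> real"
  assumes dpos: "\<delta> > 0" and mx: "\<And>t. \<bar>t\<bar> < \<delta> \<Longrightarrow> f t \<le> f 0"
    and d1: "\<And>t. \<bar>t\<bar> < \<delta> \<Longrightarrow> DERIV f t :> f1 t"
    and d2: "DERIV f1 0 :> L"
  shows "L \<le> 0"
proof (rule ccontr)
  assume "\<not> L \<le> 0"
  then have L: "L > 0" by simp
  have f10: "f1 0 = 0"
    by (rule DERIV_local_max[OF d1[of 0] dpos]) (use dpos mx in auto)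
  obtain d' where d': "d' > 0" "\<And>h. h > 0 \<Longrightarrow> h < d' \<Longrightarrow> f1 0 < f1 (0 + h)"
    using DERIV_pos_inc_right[OF d2 L] by blast
  define b where "b = min d' \<delta> / 2"
  have b: "b > 0" "b < d'" "b < \<delta>" using d' dpos by (auto simp: b_def)
  have "f 0 < f b"
  proof (rule DERIV_pos_imp_increasing_open[OF b(1)])
    fix x assume x: "0 < x" "x < b"
    show "\<exists>y. DERIV f x :> y \<and> y > 0"
      using d1[of x] d'(2)[of x] x b f10 by auto
  next
    show "continuous_on {0..b} f"
    proof (intro continuous_at_imp_continuous_on ballI)
      fix x assume "x \<in> {0..b}"
      then have "\<bar>x\<bar> < \<delta>" using b by auto
      from DERIV_isCont[OF d1[OF this]] show "isCont f x" .
    qed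
  qed
  moreover have "f b \<le> f 0" using mx b by auto
  ultimately show False by simp
qed

lemma line_deriv:
  fixes f :: "real^'n::finite \<Rightarrow> real"
  assumes "(f has_derivative Df) (at (x + t *\<^sub>R v))"
  shows "((\<lambda>s. f (x + s *\<^sub>R v)) has_real_derivative Df v) (at t)"
proof -
  have lin: "linear Df" using assms has_derivative_linear by blast
  have "((\<lambda>s. f (x + s *\<^sub>R v)) has_derivative (\<lambda>h. Df (h *\<^sub>R v))) (at t)"
    by (rule has_derivative_compose[of "\<lambda>s. x + s *\<^sub>R v" _ _ _ f, OF _ assms])
       (auto intro!: derivative_eq_intros)
  moreover have "(\<lambda>h. Df (h *\<^sub>R v)) = (\<lambda>h. Df v * h)"
    using linear_scale[OF lin] by (auto simp: fun_eq_iff)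
  ultimately show ?thesis by (simp add: has_field_derivative_def)
qed

lemma linear_expand:
  fixes Df :: "real^'n::finite \<Rightarrow> real"
  assumes "linear Df"
  shows "Df v = (\<Sum>j\<in>UNIV. v$j * Df (axis j 1))"
proof -
  have "Df v = Df (\<Sum>j\<in>UNIV. (v$j) *\<^sub>R axis j 1)"
    using basis_expansion[of v] by (simp add: scalar_mult_eq_scaleR)
  also have "\<dots> = (\<Sum>j\<in>UNIV. v$j * Df (axis j 1))"
    using assms by (simp add: linear_sum linear_scale)
  finally show ?thesis .
qed

lemma line_second_u:
  fixes u :: "real^'n::finite \<Rightarrow> real"
  assumes sm: "smooth_on \<Omega> u" and op: "open \<Omega>" and x: "x \<in> \<Omega>"
  shows "\<exists>\<delta>>0. \<exists>g1. (\<forall>t. \<bar>t\<bar> < \<delta> \<longrightarrow> x + t *\<^sub>R v \<in> \<Omega> \<and> DERIV (\<lambda>t. u (x + t *\<^sub>R v)) t :> g1 t)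
      \<and> DERIV g1 0 :> v \<bullet> (hessian u x *v v)"
proof -
  obtain e where e: "e > 0" "ball x e \<subseteq> \<Omega>" using op x open_contains_ball by blast
  define \<delta> where "\<delta> = e / (norm v + 1)"
  have np: "norm v + 1 > 0" by (simp add: add_nonneg_pos)
  have dpos: "\<delta> > 0" using e np by (simp add: \<delta>_def)
  have inO: "x + t *\<^sub>R v \<in> \<Omega>" if "\<bar>t\<bar> < \<delta>" for t
  proof -
    have "\<bar>t\<bar> * norm v \<le> \<bar>t\<bar> * (norm v + 1)" by (simp add: mult_left_mono)
    also have "\<dots> < \<delta> * (norm v + 1)" using that np by (intro mult_strict_right_mono) auto
    also have "\<dots> = e" using np by (simp add: \<delta>_def)
    finally have "norm (t *\<^sub>R v) < e" by simp
    then show ?thesis using e by (auto simp: dist_norm)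
  qed
  have diff0: "\<And>y. y \<in> \<Omega> \<Longrightarrow> u differentiable (at y)"
    using sm unfolding smooth_on_def by (metis iter_partial.simps(1))
  have diff1: "\<And>y j. y \<in> \<Omega> \<Longrightarrow> iter_partial [j] u differentiable (at y)"
    using sm unfolding smooth_on_def by blast
  define g1 where "g1 = (\<lambda>t. \<Sum>j\<in>UNIV. v$j * iter_partial [j] u (x + t *\<^sub>R v))"
  have "DERIV (\<lambda>t. u (x + t *\<^sub>R v)) t :> g1 t" if "\<bar>t\<bar> < \<delta>" for t
  proof -
    have hd: "(u has_derivative frechet_derivative u (at (x + t *\<^sub>R v))) (at (x + t *\<^sub>R v))"
      using diff0[OF inO[OF that]] frechet_derivative_works by blast
    have "frechet_derivative u (at (x + t *\<^sub>R v)) v = g1 t"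
      unfolding g1_def
      by (subst linear_expand[OF has_derivative_linear[OF hd]]) simp
    with line_deriv[OF hd] show ?thesis by simp
  qed
  moreover have "DERIV g1 0 :> v \<bullet> (hessian u x *v v)"
  proof -
    define P where "P = (\<lambda>j. iter_partial [j] u)"
    have hd: "(P j has_derivative frechet_derivative (P j) (at x)) (at (x + 0 *\<^sub>R v))" for j
      using diff1[OF x, of j] unfolding P_def frechet_derivative_works by simp
    have "DERIV g1 0 :> (\<Sum>j\<in>UNIV. v$j * frechet_derivative (P j) (at x) v)"
      unfolding g1_def using hd unfolding P_def
      by (intro DERIV_sum DERIV_cmult line_deriv) auto
    moreover have "(\<Sum>j\<in>UNIV. v$j * frechet_derivative (P j) (at x) v) = v \<bullet> (hessian u x *v v)"
    proof -
      have "frechet_derivative (P j) (at x) v = (\<Sum>i\<in>UNIV. v$i * hessian u x $ i $ j)" for j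
        by (subst linear_expand[OF has_derivative_linear[OF hd[of j]]])
           (simp add: hessian_def P_def)
      then have "(\<Sum>j\<in>UNIV. v$j * frechet_derivative (P j) (at x) v)
          = (\<Sum>j\<in>UNIV. \<Sum>i\<in>UNIV. v$i * hessian u x $ i $ j * v$j)"
        by (simp add: sum_distrib_left algebra_simps)
      also have "\<dots> = v \<bullet> (hessian u x *v v)"
        by (subst sum.swap) (simp add: qf_inner qf_def)
      finally show ?thesis .
    qed
    ultimately show ?thesis by simp
  qed
  ultimately show ?thesis using dpos inO by blast
qed




definition line2 :: "(real^'n::finite \<Rightarrow> real) \<Rightarrow> real^'n \<Rightarrow> real^'n \<Rightarrow> real \<Rightarrow> bool" where
  "line2 w y v W2 \<longleftrightarrow> (\<exists>\<delta>>0. \<exists>g1. (\<forall>t. \<bar>t\<bar> < \<delta> \<longrightarrow> DERIV (\<lambda>t. w (y + t *\<^sub>R v)) t :> g1 t) \<and> DERIV g1 0 :> W2)"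

lemma open_closure_frontier:
  assumes "open \<Omega>" "y \<in> closure \<Omega>" "y \<notin> frontier \<Omega>"
  shows "y \<in> \<Omega>"
  using assms by (simp add: frontier_def interior_open)

lemma comparison:
  fixes u w :: "real^'n::finite \<Rightarrow> real"
  assumes card: "CARD('n) \<ge> 2" and op: "open \<Omega>" and bd: "bounded \<Omega>"
    and sm: "smooth_on \<Omega> u" and cu: "continuous_on (closure \<Omega>) u"
    and cw: "continuous_on (closure \<Omega>) w"
    and fr: "\<And>y. y \<in> frontier \<Omega> \<Longrightarrow> w y \<le> u y"
    and hyp: "\<And>y. y \<in> \<Omega> \<Longrightarrow> w y > u y \<Longrightarrow> \<exists>c1 c2 \<nu>. c1 > 0 \<and> c2 > 0 \<and> norm \<nu> = 1 \<and>
        c1^(CARD('n) - 1) * c2 > det (hessian u y) \<and>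
        (\<forall>v. \<exists>W2. line2 w y v W2 \<and> W2 \<ge> c1 * ((norm v)^2 - (\<nu> \<bullet> v)^2) + c2 * (\<nu> \<bullet> v)^2)"
    and y0: "y0 \<in> \<Omega>"
  shows "w y0 \<le> u y0"
proof (rule ccontr)
  assume "\<not> w y0 \<le> u y0"
  then have y0': "w y0 - u y0 > 0" by simp
  have cpt: "compact (closure \<Omega>)" using bd by (simp add: compact_closure)
  have "\<exists>x\<in>closure \<Omega>. \<forall>y\<in>closure \<Omega>. w y - u y \<le> w x - u x"
    by (rule continuous_attains_sup[OF cpt]) (use y0 closure_subset cw cu in \<open>auto intro!: continuous_intros\<close>)
  then obtain x0 where x0c: "x0 \<in> closure \<Omega>" and mx: "\<And>y. y \<in> closure \<Omega> \<Longrightarrow> w y - u y \<le> w x0 - u x0" by blast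
  have pos: "w x0 - u x0 > 0" using mx[of y0] y0 y0' closure_subset by force
  have x0: "x0 \<in> \<Omega>"
    using open_closure_frontier[OF op x0c] fr[of x0] pos by force
  obtain c1 c2 \<nu> where c: "c1 > 0" "c2 > 0" "norm \<nu> = 1" "c1^(CARD('n) - 1) * c2 > det (hessian u x0)"
    and lw: "\<And>v. \<exists>W2. line2 w x0 v W2 \<and> W2 \<ge> c1 * ((norm v)^2 - (\<nu> \<bullet> v)^2) + c2 * (\<nu> \<bullet> v)^2"
    using hyp[OF x0] pos by force
  have "v \<bullet> (hessian u x0 *v v) \<ge> c1 * ((norm v)^2 - (\<nu> \<bullet> v)^2) + c2 * (\<nu> \<bullet> v)^2" for v
  proof -
    obtain W2 where W2: "line2 w x0 v W2" "W2 \<ge> c1 * ((norm v)^2 - (\<nu> \<bullet> v)^2) + c2 * (\<nu> \<bullet> v)^2"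
      using lw by blast
    obtain \<delta>1 g1 where g: "\<delta>1 > 0" "\<And>t. \<bar>t\<bar> < \<delta>1 \<Longrightarrow> DERIV (\<lambda>t. w (x0 + t *\<^sub>R v)) t :> g1 t"
      "DERIV g1 0 :> W2" using W2(1) unfolding line2_def by blast
    obtain \<delta>2 gu where gu: "\<delta>2 > 0" "\<And>t. \<bar>t\<bar> < \<delta>2 \<Longrightarrow> x0 + t *\<^sub>R v \<in> \<Omega>"
      "\<And>t. \<bar>t\<bar> < \<delta>2 \<Longrightarrow> DERIV (\<lambda>t. u (x0 + t *\<^sub>R v)) t :> gu t"
      "DERIV gu 0 :> v \<bullet> (hessian u x0 *v v)"
      using line_second_u[OF sm op x0, of v] by blast
    define \<delta> where "\<delta> = min \<delta>1 \<delta>2"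
    have "W2 - v \<bullet> (hessian u x0 *v v) \<le> 0"
    proof (rule second_order_1d[of \<delta> "\<lambda>t. w (x0 + t *\<^sub>R v) - u (x0 + t *\<^sub>R v)" "\<lambda>t. g1 t - gu t"])
      show "\<delta> > 0" using g gu by (simp add: \<delta>_def)
      show "w (x0 + t *\<^sub>R v) - u (x0 + t *\<^sub>R v) \<le> w (x0 + 0 *\<^sub>R v) - u (x0 + 0 *\<^sub>R v)" if "\<bar>t\<bar> < \<delta>" for t
        using mx[of "x0 + t *\<^sub>R v"] gu(2)[of t] that closure_subset by (auto simp: \<delta>_def)
      show "DERIV (\<lambda>t. w (x0 + t *\<^sub>R v) - u (x0 + t *\<^sub>R v)) t :> g1 t - gu t" if "\<bar>t\<bar> < \<delta>" for t
        using that by (intro DERIV_diff g(2) gu(3)) (auto simp: \<delta>_def)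
      show "DERIV (\<lambda>t. g1 t - gu t) 0 :> W2 - v \<bullet> (hessian u x0 *v v)"
        by (intro DERIV_diff g(3) gu(4))
    qed
    then show ?thesis using W2(2) by linarith
  qed
  from det_lower_nu[OF card c(3) c(1) c(2) this] c(4) show False by linarith
qed




lemma shrink_in:
  fixes \<Omega> :: "(real^'n::finite) set"
  assumes "convex \<Omega>" "open \<Omega>" "c \<in> \<Omega>" "p \<in> closure \<Omega>" "0 < e" "e \<le> 1"
  shows "p - e *\<^sub>R (p - c) \<in> \<Omega>"
  using mem_interior_closure_convex_shrink[of \<Omega> c p e] assms by (simp add: interior_open)

lemma shrink_tendsto:
  fixes p c :: "real^'n::finite"
  shows "((\<lambda>e. p - e *\<^sub>R (p - c)) \<longlongrightarrow> p) (at_right 0)"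
proof -
  have "((\<lambda>e. p - e *\<^sub>R (p - c)) \<longlongrightarrow> p - 0 *\<^sub>R (p - c)) (at_right 0)"
    by (intro tendsto_intros tendsto_ident_at)
  then show ?thesis by simp
qed

lemma convex_on_closure:
  fixes \<Omega> :: "(real^'n::finite) set" and u :: "real^'n \<Rightarrow> real"
  assumes cv: "convex \<Omega>" and op: "open \<Omega>" and ne: "\<Omega> \<noteq> {}"
    and cf: "convex_on \<Omega> u" and cu: "continuous_on (closure \<Omega>) u"
  shows "convex_on (closure \<Omega>) u"
proof (rule convex_onI)
  show "convex (closure \<Omega>)" using cv by simp
  fix t :: real and x y assume t: "0 < t" "t < 1" and x: "x \<in> closure \<Omega>" and y: "y \<in> closure \<Omega>"
  obtain c where c: "c \<in> \<Omega>" using ne by blast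
  define z where "z = (1 - t) *\<^sub>R x + t *\<^sub>R y"
  have z: "z \<in> closure \<Omega>" unfolding z_def using x y t convex_closure[OF cv]
    by (simp add: convex_def)
  define s where "s = (\<lambda>e p. p - e *\<^sub>R (p - c))"
  have ev: "\<forall>\<^sub>F e in at_right 0. s e p \<in> \<Omega>" if "p \<in> closure \<Omega>" for p
  proof -
    have "\<forall>\<^sub>F e in at_right (0::real). 0 < e \<and> e \<le> 1"
      by (simp add: eventually_at_right_field) (rule exI[of _ 1], auto)
    then show ?thesis
      by eventually_elim (use shrink_in[OF cv op c that] in \<open>auto simp: s_def\<close>)
  qed
  have lim: "((\<lambda>e. u (s e p)) \<longlongrightarrow> u p) (at_right 0)" if "p \<in> closure \<Omega>" for p
  proof (rule continuous_on_tendsto_compose[OF cu _ that])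
    show "((\<lambda>e. s e p) \<longlongrightarrow> p) (at_right 0)" unfolding s_def by (rule shrink_tendsto)
    show "\<forall>\<^sub>F e in at_right 0. s e p \<in> closure \<Omega>"
      using ev[OF that] by eventually_elim (use closure_subset in auto)
  qed
  have "\<forall>\<^sub>F e in at_right 0. u (s e z) \<le> (1 - t) * u (s e x) + t * u (s e y)"
    using ev[OF x] ev[OF y]
  proof eventually_elim
    case (elim e)
    have "s e z = (1 - t) *\<^sub>R s e x + t *\<^sub>R s e y"
      by (simp add: s_def z_def algebra_simps)
    then show ?case using convex_onD[OF cf, of t "s e x" "s e y"] t elim by simp
  qed
  moreover have "((\<lambda>e. (1 - t) * u (s e x) + t * u (s e y)) \<longlongrightarrow> (1 - t) * u x + t * u y) (at_right 0)"
    by (intro tendsto_intros lim x y)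
  ultimately have "u z \<le> (1 - t) * u x + t * u y"
    by (intro tendsto_le[OF trivial_limit_at_right_real _ lim[OF z]])
  then show "u ((1 - t) *\<^sub>R x + t *\<^sub>R y) \<le> (1 - t) * u x + t * u y" by (simp add: z_def)
qed

lemma segment_frontier:
  fixes \<Omega> :: "(real^'n::finite) set"
  assumes "a \<in> \<Omega>" "b \<notin> \<Omega>"
  shows "\<exists>f\<in>closed_segment a b. f \<in> frontier \<Omega>"
  using connected_Int_frontier[of "closed_segment a b" \<Omega>] assms by auto

lemma exit_point:
  fixes \<Omega> :: "(real^'n::finite) set"
  assumes bd: "bounded \<Omega>" and op: "open \<Omega>" and x: "x \<in> \<Omega>" and v: "v \<noteq> 0"
  shows "\<exists>\<tau>>0. x + \<tau> *\<^sub>R v \<in> frontier \<Omega>"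
proof -
  obtain r where r: "r > 0" "\<And>y. y \<in> \<Omega> \<Longrightarrow> norm y \<le> r" using bd bounded_pos by metis
  define B where "B = (r + norm x + 1) / norm v"
  have nv: "norm v > 0" using v by simp
  have B: "B > 0" using r nv by (simp add: B_def add_pos_nonneg)
  have "norm (x + B *\<^sub>R v) > r"
  proof -
    have rp: "r + norm x + 1 > 0" using r by (simp add: add_pos_nonneg)
    have "norm (B *\<^sub>R v) = r + norm x + 1" using nv B rp by (simp add: B_def)
    moreover have "norm (B *\<^sub>R v) \<le> norm (x + B *\<^sub>R v) + norm x"
      using norm_triangle_ineq4[of "x + B *\<^sub>R v" x] by simp
    ultimately show ?thesis by linarith
  qed
  then have "x + B *\<^sub>R v \<notin> \<Omega>" using r by force
  from segment_frontier[OF x this] obtain f where f: "f \<in> closed_segment x (x + B *\<^sub>R v)" "f \<in> frontier \<Omega>" by blast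
  then obtain \<mu> where \<mu>: "0 \<le> \<mu>" "\<mu> \<le> 1" "f = (1 - \<mu>) *\<^sub>R x + \<mu> *\<^sub>R (x + B *\<^sub>R v)"
    unfolding closed_segment_def by blast
  have fe: "f = x + (\<mu> * B) *\<^sub>R v" using \<mu>(3) by (simp add: algebra_simps)
  have "f \<noteq> x" using f(2) x op frontier_disjoint_eq by blast
  then have "\<mu> \<noteq> 0" using fe by auto
  then have "\<mu> * B > 0" using \<mu> B by simp
  with fe f show ?thesis by blast
qed

lemma u_nonpos:
  fixes \<Omega> :: "(real^'n::finite) set" and u :: "real^'n \<Rightarrow> real"
  assumes bd: "bounded \<Omega>" and op: "open \<Omega>" and cvx: "convex_on (closure \<Omega>) u"
    and fr: "\<And>y. y \<in> frontier \<Omega> \<Longrightarrow> u y = 0" and x: "x \<in> \<Omega>"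
  shows "u x \<le> 0"
proof -
  obtain k :: 'n where True by simp
  define v :: "real^'n" where "v = axis k 1"
  have v: "v \<noteq> 0" "-v \<noteq> 0" by (auto simp: v_def axis_eq_0_iff)
  obtain \<tau>1 where t1: "\<tau>1 > 0" "x + \<tau>1 *\<^sub>R v \<in> frontier \<Omega>" using exit_point[OF bd op x v(1)] by blast
  obtain \<tau>2 where t2: "\<tau>2 > 0" "x + \<tau>2 *\<^sub>R (-v) \<in> frontier \<Omega>" using exit_point[OF bd op x v(2)] by blast
  define t where "t = \<tau>1 / (\<tau>1 + \<tau>2)"
  have t: "0 \<le> t" "t \<le> 1" using t1 t2 by (auto simp: t_def)
  have eq: "(1 - t) *\<^sub>R (x + \<tau>1 *\<^sub>R v) + t *\<^sub>R (x + \<tau>2 *\<^sub>R (-v)) = x"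
  proof -
    have "(1 - t) * \<tau>1 - t * \<tau>2 = 0" using t1 t2 by (simp add: t_def field_simps)
    then have "((1 - t) * \<tau>1 - t * \<tau>2) *\<^sub>R v = 0" by simp
    moreover have "(1 - t) *\<^sub>R (x + \<tau>1 *\<^sub>R v) + t *\<^sub>R (x + \<tau>2 *\<^sub>R (-v)) = x + ((1 - t) * \<tau>1 - t * \<tau>2) *\<^sub>R v"
      by (simp add: vec_eq_iff algebra_simps)
    ultimately show ?thesis by simp
  qed
  have "u x \<le> (1 - t) * u (x + \<tau>1 *\<^sub>R v) + t * u (x + \<tau>2 *\<^sub>R (-v))"
    using convex_onD[OF cvx t, of "x + \<tau>1 *\<^sub>R v" "x + \<tau>2 *\<^sub>R (-v)"] t1 t2 eq
    by (simp add: frontier_def)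
  then show ?thesis using fr t1 t2 by simp
qed

lemma support_normal:
  fixes \<Omega> :: "(real^'n::finite) set"
  assumes cv: "convex \<Omega>" and op: "open \<Omega>" and ne: "\<Omega> \<noteq> {}" and p: "p \<in> frontier \<Omega>"
  shows "\<exists>\<nu>. norm \<nu> = 1 \<and> (\<forall>y\<in>\<Omega>. (y - p) \<bullet> \<nu> > 0)"
proof -
  have "p \<notin> \<Omega>" using p op frontier_disjoint_eq by blast
  then obtain a b where ab: "a \<noteq> 0" "\<forall>x\<in>{p}. inner a x \<le> b" "\<forall>x\<in>\<Omega>. inner a x \<ge> b"
    using separating_hyperplane_sets[of "{p}" \<Omega>] cv ne by auto
  define \<nu> where "\<nu> = a /\<^sub>R norm a"
  have na: "norm a > 0" using ab by simp
  have "(y - p) \<bullet> \<nu> > 0" if y: "y \<in> \<Omega>" for y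
  proof -
    obtain e where e: "e > 0" "ball y e \<subseteq> \<Omega>" using op y open_contains_ball by blast
    define y' where "y' = y - (e / 2 / norm a) *\<^sub>R a"
    have "dist y y' < e" using e na by (simp add: y'_def dist_norm)
    then have "y' \<in> \<Omega>" using e by auto
    then have "inner a y' \<ge> inner a p" using ab by auto
    moreover have "inner a y' = inner a y - e / 2 * norm a"
      using na by (simp add: y'_def inner_diff_right power2_norm_eq_inner[symmetric] power2_eq_square)
    moreover have "e / 2 * norm a > 0" using e na by simp
    ultimately have "inner a (y - p) > 0" by (simp add: inner_diff_right)
    then show ?thesis using na by (simp add: \<nu>_def inner_commute)
  qed
  moreover have "norm \<nu> = 1" using na by (simp add: \<nu>_def)
  ultimately show ?thesis by blast
qed

lemma infdist_le_s:
  fixes \<Omega> :: "(real^'n::finite) set"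
  assumes nu: "norm \<nu> = 1" and pos: "\<forall>z\<in>\<Omega>. (z - p) \<bullet> \<nu> > 0" and y: "y \<in> \<Omega>"
  shows "infdist y (frontier \<Omega>) \<le> (y - p) \<bullet> \<nu>"
proof -
  define z0 where "z0 = y - ((y - p) \<bullet> \<nu>) *\<^sub>R \<nu>"
  have nn: "\<nu> \<bullet> \<nu> = 1" using nu by (simp add: dot_square_norm)
  have "(z0 - p) \<bullet> \<nu> = 0"
    by (simp add: z0_def inner_diff_left nn) 
  then have "z0 \<notin> \<Omega>" using pos by force
  from segment_frontier[OF y this] obtain f where f: "f \<in> closed_segment y z0" "f \<in> frontier \<Omega>" by blast
  have "dist y f \<le> dist y z0" using dist_in_closed_segment[OF f(1)] by (simp add: dist_commute)
  also have "dist y z0 = (y - p) \<bullet> \<nu>"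
    using pos y nu by (simp add: z0_def dist_norm less_imp_le)
  finally show ?thesis using infdist_le[OF f(2), of y] by linarith
qed




lemma barrier_ineq:
  fixes s0 a d E V P \<sigma> R2 :: real
  assumes s0: "s0 > 0" and a: "0 < a" "a < 1" and d: "d > 0" and E: "0 \<le> E" "E \<le> d^2"
    and V: "V \<ge> 0" and P: "P^2 \<le> E * V" and R2: "R2 = d^2 * (2 + 4 * a / (1 - a))"
  shows "a * (a - 1) * \<sigma>^2 * (E - R2) / s0^2 + 4 * a * \<sigma> * P / s0 + 2 * V
         \<ge> V + a * (1 - a) * d^2 * \<sigma>^2 / s0^2"
proof -
  define z where "z = 2 * a * \<sigma> / s0"
  have PV: "P^2 \<le> d^2 * V" using P E V by (meson mult_right_mono order_trans)
  have key: "z^2 * d^2 + 2 * z * P + V \<ge> 0"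
  proof -
    have "d^2 * (z^2 * d^2 + 2 * z * P + V) \<ge> (z * d^2 + P)^2"
      using PV by (simp add: power2_eq_square algebra_simps)
    moreover have "(z * d^2 + P)^2 \<ge> 0" by simp
    ultimately have "d^2 * (z^2 * d^2 + 2 * z * P + V) \<ge> 0" by linarith
    then show ?thesis using d by (simp add: zero_le_mult_iff)
  qed
  have R: "R2 - E - d^2 \<ge> 4 * a * d^2 / (1 - a)"
  proof -
    have "R2 - E - d^2 \<ge> R2 - 2 * d^2" using E by simp
    also have "R2 - 2 * d^2 = 4 * a * d^2 / (1 - a)" using a by (simp add: R2 field_simps)
    finally show ?thesis .
  qed
  have "a * (1 - a) * (R2 - E - d^2) \<ge> 4 * a^2 * d^2"
  proof -
    have "a * (1 - a) * (R2 - E - d^2) \<ge> a * (1 - a) * (4 * a * d^2 / (1 - a))"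
      using R a by (intro mult_left_mono) auto
    also have "a * (1 - a) * (4 * a * d^2 / (1 - a)) = 4 * a^2 * d^2" using a by (simp add: field_simps power2_eq_square)
    finally show ?thesis by simp
  qed
  then have "a * (1 - a) * (R2 - E - d^2) * (\<sigma>^2 / s0^2) \<ge> 4 * a^2 * d^2 * (\<sigma>^2 / s0^2)"
    by (intro mult_right_mono) auto
  moreover have "4 * a^2 * d^2 * (\<sigma>^2 / s0^2) = z^2 * d^2" by (simp add: z_def power2_eq_square field_simps)
  moreover have "a * (a - 1) * \<sigma>^2 * (E - R2) / s0^2 + 4 * a * \<sigma> * P / s0 + 2 * V
         - (V + a * (1 - a) * d^2 * \<sigma>^2 / s0^2)
       = a * (1 - a) * (R2 - E - d^2) * (\<sigma>^2 / s0^2) + 2 * z * P + V"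
    using s0 by (simp add: z_def field_simps power2_eq_square)
  ultimately show ?thesis using key by linarith
qed




lemma powr_line_deriv:
  fixes s0 \<sigma> a t :: real
  assumes "s0 + t * \<sigma> > 0"
  shows "DERIV (\<lambda>t. (s0 + t * \<sigma>) powr a) t :> a * \<sigma> * (s0 + t * \<sigma>) powr (a - 1)"
proof -
  have "DERIV (\<lambda>t. s0 + t * \<sigma>) t :> \<sigma>" by (auto intro!: derivative_eq_intros)
  from DERIV_chain2[OF has_real_derivative_powr[OF assms] this]
  have "DERIV (\<lambda>t. (s0 + t * \<sigma>) powr a) t :> a * (s0 + t * \<sigma>) powr (a - 1) * \<sigma>" by simp
  then show ?thesis by (simp add: mult_ac)
qed

lemma test:
  fixes s0 \<sigma> a t A B C R2 lam :: real
  assumes "s0 + t * \<sigma> > 0"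
  shows "DERIV (\<lambda>t. lam * ((s0 + t * \<sigma>) powr a * (A + 2 * t * B + t^2 * C - (s0 + t * \<sigma>)^2 - R2))) t :>
     lam * (a * \<sigma> * (s0 + t * \<sigma>) powr (a - 1) * (A + 2 * t * B + t^2 * C - (s0 + t * \<sigma>)^2 - R2)
       + (s0 + t * \<sigma>) powr a * (2 * B + 2 * t * C - 2 * \<sigma> * (s0 + t * \<sigma>)))"
proof -
  have p: "DERIV (\<lambda>t. A + 2 * t * B + t^2 * C - (s0 + t * \<sigma>)^2 - R2) t :> 2 * B + 2 * t * C - 2 * \<sigma> * (s0 + t * \<sigma>)"
    by (auto intro!: derivative_eq_intros simp: algebra_simps)
  show ?thesis
    by (rule DERIV_cmult, rule DERIV_mult[OF powr_line_deriv[OF assms] p, THEN DERIV_cong]) (simp add: algebra_simps)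
qed


lemma test2:
  fixes s0 \<sigma> a A B C R2 lam :: real
  assumes "s0 > 0"
  shows "DERIV (\<lambda>t. lam * (a * \<sigma> * (s0 + t * \<sigma>) powr (a - 1) * (A + 2 * t * B + t^2 * C - (s0 + t * \<sigma>)^2 - R2)
       + (s0 + t * \<sigma>) powr a * (2 * B + 2 * t * C - 2 * \<sigma> * (s0 + t * \<sigma>)))) 0 :>
     lam * (a * (a - 1) * \<sigma>^2 * s0 powr (a - 2) * (A - s0^2 - R2) + 2 * a * \<sigma> * s0 powr (a - 1) * (2 * B - 2 * s0 * \<sigma>)
        + s0 powr a * (2 * C - 2 * \<sigma>^2))"
proof -
  have s: "s0 + 0 * \<sigma> > 0" using assms by simp
  have p: "DERIV (\<lambda>t. A + 2 * t * B + t^2 * C - (s0 + t * \<sigma>)^2 - R2) 0 :> 2 * B - 2 * \<sigma> * s0"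
    by (auto intro!: derivative_eq_intros simp: algebra_simps)
  have p1: "DERIV (\<lambda>t. 2 * B + 2 * t * C - 2 * \<sigma> * (s0 + t * \<sigma>)) 0 :> 2 * C - 2 * \<sigma>^2"
    by (auto intro!: derivative_eq_intros simp: algebra_simps power2_eq_square)
  have h1: "DERIV (\<lambda>t. (s0 + t * \<sigma>) powr (a - 1)) 0 :> (a - 1) * \<sigma> * s0 powr (a - 2)"
    using powr_line_deriv[OF s, of "a - 1"] by simp
  have h2: "DERIV (\<lambda>t. (s0 + t * \<sigma>) powr a) 0 :> a * \<sigma> * s0 powr (a - 1)"
    using powr_line_deriv[OF s, of a] by simp
  note m1 = DERIV_cmult[OF DERIV_mult[OF h1 p], of "a * \<sigma>"]
  note m2 = DERIV_mult[OF h2 p1]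
  note m = DERIV_cmult[OF DERIV_add[OF m1 m2], of lam]
  from m show ?thesis by (simp add: algebra_simps power2_eq_square)
qed



definition barrier :: "real \<Rightarrow> real \<Rightarrow> real \<Rightarrow> real^'n::finite \<Rightarrow> real^'n \<Rightarrow> real^'n \<Rightarrow> real" where
  "barrier lam a R2 p \<nu> z = lam * (((z - p) \<bullet> \<nu>) powr a * ((norm (z - p))^2 - ((z - p) \<bullet> \<nu>)^2 - R2))"

lemma barrier_line:
  fixes y p \<nu> v :: "real^'n::finite"
  assumes s0: "(y - p) \<bullet> \<nu> > 0"
  shows "line2 (barrier lam a R2 p \<nu>) y v
     (lam * (a * (a - 1) * (v \<bullet> \<nu>)^2 * ((y - p) \<bullet> \<nu>) powr (a - 2) * ((y - p) \<bullet> (y - p) - ((y - p) \<bullet> \<nu>)^2 - R2)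
        + 2 * a * (v \<bullet> \<nu>) * ((y - p) \<bullet> \<nu>) powr (a - 1) * (2 * ((y - p) \<bullet> v) - 2 * ((y - p) \<bullet> \<nu>) * (v \<bullet> \<nu>))
        + ((y - p) \<bullet> \<nu>) powr a * (2 * (v \<bullet> v) - 2 * (v \<bullet> \<nu>)^2)))"
proof -
  define e where "e = y - p"
  define S0 where "S0 = e \<bullet> \<nu>"
  define \<sigma> where "\<sigma> = v \<bullet> \<nu>"
  define A where "A = e \<bullet> e"
  define B where "B = e \<bullet> v"
  define C where "C = v \<bullet> v"
  have S0: "S0 > 0" using s0 by (simp add: S0_def e_def)
  have feq: "(\<lambda>t. barrier lam a R2 p \<nu> (y + t *\<^sub>R v)) =
     (\<lambda>t. lam * ((S0 + t * \<sigma>) powr a * (A + 2 * t * B + t^2 * C - (S0 + t * \<sigma>)^2 - R2)))"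
  proof (rule ext)
    fix t
    have yp: "y + t *\<^sub>R v - p = e + t *\<^sub>R v" by (simp add: e_def algebra_simps)
    have "(norm (e + t *\<^sub>R v))^2 = (e + t *\<^sub>R v) \<bullet> (e + t *\<^sub>R v)" by (rule power2_norm_eq_inner)
    also have "\<dots> = A + 2 * t * B + t^2 * C"
      by (simp add: inner_add_left inner_add_right A_def B_def C_def inner_commute power2_eq_square algebra_simps)
    finally have "(norm (e + t *\<^sub>R v))^2 = A + 2 * t * B + t^2 * C" .
    moreover have "(e + t *\<^sub>R v) \<bullet> \<nu> = S0 + t * \<sigma>" by (simp add: S0_def \<sigma>_def inner_add_left)
    ultimately show "barrier lam a R2 p \<nu> (y + t *\<^sub>R v) = lam * ((S0 + t * \<sigma>) powr a * (A + 2 * t * B + t^2 * C - (S0 + t * \<sigma>)^2 - R2))"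
      unfolding barrier_def yp by simp
  qed
  define \<delta> where "\<delta> = S0 / (\<bar>\<sigma>\<bar> + 1)"
  have dpos: "\<delta> > 0" using S0 by (simp add: \<delta>_def add_nonneg_pos)
  have pos: "S0 + t * \<sigma> > 0" if "\<bar>t\<bar> < \<delta>" for t
  proof -
    have "\<bar>t * \<sigma>\<bar> \<le> \<bar>t\<bar> * (\<bar>\<sigma>\<bar> + 1)" by (simp add: abs_mult mult_left_mono)
    also have "\<dots> < \<delta> * (\<bar>\<sigma>\<bar> + 1)" using that by (intro mult_strict_right_mono) (auto simp: add_nonneg_pos)
    also have "\<dots> = S0" by (simp add: \<delta>_def add_nonneg_pos)
    finally show ?thesis by linarith
  qed
  define g1 where "g1 = (\<lambda>t. lam * (a * \<sigma> * (S0 + t * \<sigma>) powr (a - 1) * (A + 2 * t * B + t^2 * C - (S0 + t * \<sigma>)^2 - R2)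
       + (S0 + t * \<sigma>) powr a * (2 * B + 2 * t * C - 2 * \<sigma> * (S0 + t * \<sigma>))))"
  have "\<forall>t. \<bar>t\<bar> < \<delta> \<longrightarrow> DERIV (\<lambda>t. barrier lam a R2 p \<nu> (y + t *\<^sub>R v)) t :> g1 t"
    unfolding feq g1_def using test pos by blast
  moreover have "DERIV g1 0 :> (lam * (a * (a - 1) * \<sigma>^2 * S0 powr (a - 2) * (A - S0^2 - R2) + 2 * a * \<sigma> * S0 powr (a - 1) * (2 * B - 2 * S0 * \<sigma>)
        + S0 powr a * (2 * C - 2 * \<sigma>^2)))"
    unfolding g1_def by (rule test2[OF S0])
  ultimately show ?thesis unfolding line2_def
    using dpos by (auto simp: e_def S0_def \<sigma>_def A_def B_def C_def)
qed




definition adm :: "real \<Rightarrow> real \<Rightarrow> (real^'n::finite) set \<Rightarrow> (real^'n \<Rightarrow> real) \<Rightarrow> bool" where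
  "adm q d \<Omega> u \<longleftrightarrow> (open \<Omega> \<and> bounded \<Omega> \<and> convex \<Omega> \<and> \<Omega> \<noteq> {} \<and> diameter \<Omega> = d \<and>
            smooth_on \<Omega> u \<and> continuous_on (closure \<Omega>) u \<and> convex_on \<Omega> u \<and>
            (\<exists>x\<in>\<Omega>. u x \<noteq> 0) \<and>
            (\<forall>x\<in>\<Omega>. det (hessian u x) = \<bar>u x\<bar> powr q) \<and>
            (\<forall>x\<in>frontier \<Omega>. u x = 0))"

lemma adm_basic:
  assumes "adm q d \<Omega> u"
  shows "open \<Omega>" "bounded \<Omega>" "convex \<Omega>" "\<Omega> \<noteq> {}" "diameter \<Omega> = d" "smooth_on \<Omega> u"
    "continuous_on (closure \<Omega>) u" "convex_on \<Omega> u" "\<And>x. x \<in> \<Omega> \<Longrightarrow> det (hessian u x) = \<bar>u x\<bar> powr q"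
    "\<And>x. x \<in> frontier \<Omega> \<Longrightarrow> u x = 0"
  using assms unfolding adm_def by auto

lemma adm_cvx_cl: "adm q d \<Omega> u \<Longrightarrow> convex_on (closure \<Omega>) u"
  using convex_on_closure adm_basic by metis

lemma adm_nonpos:
  assumes a: "adm q d \<Omega> u" and y: "y \<in> closure \<Omega>"
  shows "u y \<le> 0"
proof (cases "y \<in> frontier \<Omega>")
  case True then show ?thesis using adm_basic(10)[OF a] by simp
next
  case False
  then have "y \<in> \<Omega>" using open_closure_frontier[OF adm_basic(1)[OF a] y] by simp
  then show ?thesis using u_nonpos[OF adm_basic(2,1)[OF a] adm_cvx_cl[OF a] adm_basic(10)[OF a]] by blast
qed

lemma adm_dist:
  assumes a: "adm q d \<Omega> u" and "y \<in> closure \<Omega>" "z \<in> closure \<Omega>"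
  shows "dist y z \<le> d"
  using diameter_bounded_bound[of "closure \<Omega>" y z] diameter_closure[of \<Omega>] adm_basic[OF a] assms
  by (simp add: bounded_closure)

lemma adm_dpos:
  fixes \<Omega> :: "(real^'n::finite) set"
  assumes a: "adm q d \<Omega> u"
  shows "d > 0"
proof -
  obtain x where x: "x \<in> \<Omega>" using adm_basic(4)[OF a] by blast
  obtain e where e: "e > 0" "ball x e \<subseteq> \<Omega>" using adm_basic(1)[OF a] x open_contains_ball by blast
  obtain k :: 'n where True by simp
  define y where "y = x + (e / 2) *\<^sub>R axis k 1"
  have dy: "dist x y = e / 2" using e by (simp add: y_def dist_norm)
  then have "y \<in> \<Omega>" using e by auto
  then have "dist x y \<le> d" using adm_dist[OF a] x closure_subset by blast
  then show ?thesis using dy e by simp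
qed

lemma adm_frontier:
  assumes a: "adm q d \<Omega> u"
  shows "frontier \<Omega> \<noteq> {}" "closed (frontier \<Omega>)" "frontier \<Omega> \<subseteq> closure \<Omega>"
proof -
  have "\<Omega> \<noteq> UNIV" using adm_basic(2)[OF a] not_bounded_UNIV by metis
  then show "frontier \<Omega> \<noteq> {}" using frontier_eq_empty adm_basic(4)[OF a] by metis
  show "closed (frontier \<Omega>)" by simp
  show "frontier \<Omega> \<subseteq> closure \<Omega>" by (simp add: frontier_def)
qed

lemma adm_infdist_pos:
  assumes a: "adm q d \<Omega> u" and x: "x \<in> \<Omega>"
  shows "infdist x (frontier \<Omega>) > 0"
proof -
  have "x \<notin> frontier \<Omega>" using x adm_basic(1)[OF a] frontier_disjoint_eq by blast
  then show ?thesis using infdist_pos_not_in_closed adm_frontier[OF a] by blast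
qed

lemma adm_near:
  assumes a: "adm q d \<Omega> u"
  shows "\<exists>p\<in>frontier \<Omega>. infdist x (frontier \<Omega>) = dist x p"
  using infdist_attains_inf[OF adm_frontier(2,1)[OF a]] by blast




lemma real_bound:
  fixes m q n d :: real
  assumes m: "m \<ge> 0" and q: "0 < q" "q < n" and h: "m \<le> (m powr (q / n) + 1) * d^2 / 2"
  shows "m \<le> max 1 ((d^2) powr (n / (n - q)))"
proof (cases "m \<le> 1")
  case True then show ?thesis by simp
next
  case False
  then have m1: "m > 1" by simp
  have n: "n > 0" using q by linarith
  have qn: "0 \<le> q / n" using q n by simp
  have mp: "m powr (q / n) \<ge> 1" using ge_one_powr_ge_zero[of m "q/n"] m1 qn by simp
  have "(m powr (q / n) + 1) * d^2 / 2 \<le> m powr (q / n) * d^2"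
  proof -
    have "(m powr (q / n) + 1) / 2 \<le> m powr (q / n)" using mp by simp
    then have "(m powr (q / n) + 1) / 2 * d^2 \<le> m powr (q / n) * d^2" by (intro mult_right_mono) auto
    then show ?thesis by simp
  qed
  with h have h2: "m \<le> m powr (q / n) * d^2" by linarith
  have "m = m powr (q / n) * m powr (1 - q / n)" using m1 by (simp add: powr_add[symmetric])
  with h2 have "m powr (q / n) * m powr (1 - q / n) \<le> m powr (q / n) * d^2" by simp
  moreover have "m powr (q / n) > 0" using mp by linarith
  ultimately have h3: "m powr (1 - q / n) \<le> d^2" by (simp add: mult_le_cancel_left_pos)
  have e: "(1 - q / n) * (n / (n - q)) = 1" using q n by (simp add: field_simps)
  have "m = (m powr (1 - q / n)) powr (n / (n - q))" using m1 unfolding powr_powr e by simp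
  also have "\<dots> \<le> (d^2) powr (n / (n - q))"
    by (rule powr_mono2) (use q n h3 in auto)
  finally show ?thesis by simp
qed

lemma parab_line:
  fixes y x0 v :: "real^'n::finite"
  shows "line2 (\<lambda>z. a / 2 * ((norm (z - x0))^2 - d^2)) y v (a * (v \<bullet> v))"
proof -
  define e where "e = y - x0"
  have feq: "(\<lambda>t. a / 2 * ((norm (y + t *\<^sub>R v - x0))^2 - d^2)) =
     (\<lambda>t. a / 2 * (e \<bullet> e + 2 * t * (e \<bullet> v) + t^2 * (v \<bullet> v) - d^2))"
  proof (rule ext)
    fix t
    have eq: "y + t *\<^sub>R v - x0 = e + t *\<^sub>R v" by (simp add: e_def algebra_simps)
    have "(norm (y + t *\<^sub>R v - x0))^2 = (e + t *\<^sub>R v) \<bullet> (e + t *\<^sub>R v)" by (simp only: eq power2_norm_eq_inner)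
    also have "\<dots> = e \<bullet> e + 2 * t * (e \<bullet> v) + t^2 * (v \<bullet> v)"
      by (simp add: inner_add_left inner_add_right inner_commute power2_eq_square algebra_simps)
    finally show "a / 2 * ((norm (y + t *\<^sub>R v - x0))^2 - d^2) = a / 2 * (e \<bullet> e + 2 * t * (e \<bullet> v) + t^2 * (v \<bullet> v) - d^2)" by simp
  qed
  have "DERIV (\<lambda>t. a / 2 * (e \<bullet> e + 2 * t * (e \<bullet> v) + t^2 * (v \<bullet> v) - d^2)) t :> a / 2 * (2 * (e \<bullet> v) + 2 * t * (v \<bullet> v))" for t
    by (auto intro!: derivative_eq_intros simp: algebra_simps)
  moreover have "DERIV (\<lambda>t. a / 2 * (2 * (e \<bullet> v) + 2 * t * (v \<bullet> v))) 0 :> a * (v \<bullet> v)"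
    by (auto intro!: derivative_eq_intros simp: algebra_simps)
  ultimately show ?thesis unfolding line2_def feq
    by (intro exI[of _ 1] exI[of _ "\<lambda>t. a / 2 * (2 * (e \<bullet> v) + 2 * t * (v \<bullet> v))"] conjI allI impI) auto
qed

lemma base_bound:
  fixes q d :: real
  assumes card: "CARD('n::finite) \<ge> 2" and q: "0 < q" "q < real CARD('n)"
  shows "\<exists>M\<ge>0. \<forall>(\<Omega> :: (real^'n) set) u. adm q d \<Omega> u \<longrightarrow> (\<forall>y\<in>closure \<Omega>. \<bar>u y\<bar> \<le> M)"
proof (intro exI[of _ "max 1 ((d^2) powr (real CARD('n) / (real CARD('n) - q)))"] conjI allI impI ballI)
  show "0 \<le> max 1 ((d^2) powr (real CARD('n) / (real CARD('n) - q)))" by simp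
  fix \<Omega> :: "(real^'n) set" and u y
  assume a: "adm q d \<Omega> u" and y: "y \<in> closure \<Omega>"
  note ab = adm_basic[OF a]
  have cpt: "compact (closure \<Omega>)" using ab by (simp add: compact_closure)
  have ne: "closure \<Omega> \<noteq> {}" using ab by simp
  obtain y0 where y0: "y0 \<in> closure \<Omega>" and mx: "\<And>z. z \<in> closure \<Omega> \<Longrightarrow> \<bar>u z\<bar> \<le> \<bar>u y0\<bar>"
    using continuous_attains_sup[OF cpt ne, of "\<lambda>z. \<bar>u z\<bar>"] ab(7) by (auto intro: continuous_intros)
  define m where "m = \<bar>u y0\<bar>"
  define N where "N = real CARD('n)"
  have N: "N \<ge> 2" using card by (simp add: N_def)
  define a where "a = m powr (q / N) + 1"
  have apos: "a > 0" by (simp add: a_def add_nonneg_pos)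
  obtain x0 where x0: "x0 \<in> \<Omega>" using ab by blast
  define P where "P = (\<lambda>z. a / 2 * ((norm (z - x0))^2 - d^2))"
  have cmp: "P z \<le> u z" if z: "z \<in> \<Omega>" for z
  proof (rule comparison[OF card ab(1) ab(2) ab(6) ab(7) _ _ _ z])
    show "continuous_on (closure \<Omega>) P" unfolding P_def by (intro continuous_intros)
    fix z assume z: "z \<in> frontier \<Omega>"
    have "dist z x0 \<le> d" using adm_dist[OF a] z x0 adm_frontier(3)[OF a] closure_subset by blast
    then have "(norm (z - x0))^2 \<le> d^2" by (simp add: dist_norm power_mono)
    then have "P z \<le> 0" unfolding P_def using apos by (simp add: mult_nonneg_nonpos)
    then show "P z \<le> u z" using ab(10)[OF z] by simp
  next
    fix z assume z: "z \<in> \<Omega>"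
    obtain k :: 'n where True by simp
    have "a ^ (CARD('n) - 1) * a = a ^ CARD('n)"
      using card by (metis One_nat_def Suc_pred less_le_trans pos2 power_Suc2 zero_less_card_finite)
    moreover have "\<bar>u z\<bar> powr q < a ^ CARD('n)"
    proof -
      have "\<bar>u z\<bar> powr q \<le> m powr q" unfolding m_def using mx[of z] z closure_subset q
        by (intro powr_mono2) auto
      also have "m powr q = (m powr (q / N)) ^ CARD('n)"
      proof (cases "m = 0")
        case True then show ?thesis using card by simp
      next
        case False
        then show ?thesis using N by (simp add: powr_power powr_powr N_def)
      qed
      also have "\<dots> < a ^ CARD('n)" unfolding a_def
        by (rule power_strict_mono) (use card in auto)
      finally show ?thesis .
    qed
    ultimately have "a ^ (CARD('n) - 1) * a > det (hessian u z)" using ab(9)[OF z] by simp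
    moreover have "\<forall>v. \<exists>W2. line2 P z v W2 \<and> W2 \<ge> a * ((norm v)^2 - (axis k 1 \<bullet> v)^2) + a * (axis k 1 \<bullet> v)^2"
    proof
      fix v :: "real^'n"
      have "a * ((norm v)^2 - (axis k 1 \<bullet> v)^2) + a * (axis k 1 \<bullet> v)^2 = a * (v \<bullet> v)"
        by (simp add: algebra_simps power2_norm_eq_inner)
      then show "\<exists>W2. line2 P z v W2 \<and> W2 \<ge> a * ((norm v)^2 - (axis k 1 \<bullet> v)^2) + a * (axis k 1 \<bullet> v)^2"
        using parab_line[of a x0 d z v] unfolding P_def by auto
    qed
    ultimately show "\<exists>c1 c2 \<nu>. c1 > 0 \<and> c2 > 0 \<and> norm \<nu> = 1 \<and>
        c1^(CARD('n) - 1) * c2 > det (hessian u z) \<and>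
        (\<forall>v. \<exists>W2. line2 P z v W2 \<and> W2 \<ge> c1 * ((norm v)^2 - (\<nu> \<bullet> v)^2) + c2 * (\<nu> \<bullet> v)^2)"
      using apos by (intro exI[of _ a] exI[of _ "axis k 1"]) auto
  qed
  have bnd: "\<bar>u z\<bar> \<le> a * d^2 / 2" if z: "z \<in> closure \<Omega>" for z
  proof (cases "z \<in> frontier \<Omega>")
    case True then show ?thesis using ab(10) apos by simp
  next
    case False
    then have zO: "z \<in> \<Omega>" using open_closure_frontier[OF ab(1) z] by simp
    have "P z \<ge> - (a * d^2 / 2)" unfolding P_def using apos by (simp add: algebra_simps)
    moreover have "u z \<le> 0" using adm_nonpos[OF a z] .
    ultimately show ?thesis using cmp[OF zO] by linarith
  qed
  have "m \<le> (m powr (q / N) + 1) * d^2 / 2" using bnd[OF y0] by (simp add: m_def a_def)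
  from real_bound[OF _ q(1) _ this] have "m \<le> max 1 ((d^2) powr (N / (N - q)))"
    using q by (simp add: m_def N_def)
  then show "\<bar>u y\<bar> \<le> max 1 ((d^2) powr (real CARD('n) / (real CARD('n) - q)))"
    using mx[OF y] by (simp add: m_def N_def)
qed




lemma barrier_W2_bound:
  fixes e \<nu> v :: "real^'n::finite"
  assumes nu: "norm \<nu> = 1" and s0: "e \<bullet> \<nu> > 0" and ed: "norm e \<le> d" and d: "d > 0"
    and a: "0 < a" "a < 1" and lam: "lam > 0" and R2: "R2 = d^2 * (2 + 4 * a / (1 - a))"
  shows "lam * (a * (a - 1) * (v \<bullet> \<nu>)^2 * (e \<bullet> \<nu>) powr (a - 2) * (e \<bullet> e - (e \<bullet> \<nu>)^2 - R2)
        + 2 * a * (v \<bullet> \<nu>) * (e \<bullet> \<nu>) powr (a - 1) * (2 * (e \<bullet> v) - 2 * (e \<bullet> \<nu>) * (v \<bullet> \<nu>))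
        + (e \<bullet> \<nu>) powr a * (2 * (v \<bullet> v) - 2 * (v \<bullet> \<nu>)^2))
     \<ge> (lam * (e \<bullet> \<nu>) powr a) * ((norm v)^2 - (\<nu> \<bullet> v)^2) + (lam * (a * (1 - a) * d^2) * (e \<bullet> \<nu>) powr (a - 2)) * (\<nu> \<bullet> v)^2"
proof -
  define s0 where "s0 = e \<bullet> \<nu>"
  define \<sigma> where "\<sigma> = v \<bullet> \<nu>"
  define X where "X = s0 powr a"
  define E where "E = e \<bullet> e - s0^2"
  define V where "V = v \<bullet> v - \<sigma>^2"
  define P where "P = e \<bullet> v - s0 * \<sigma>"
  have sp: "s0 > 0" using s0 by (simp add: s0_def)
  have Xp: "X > 0" using sp by (simp add: X_def)
  have p1: "s0 powr (a - 1) = X / s0" using sp by (simp add: X_def powr_diff)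
  have p2: "s0 powr (a - 2) = X / s0^2" using sp by (simp add: X_def powr_diff)
  have nn: "\<nu> \<bullet> \<nu> = 1" using nu by (simp add: dot_square_norm)
  define e' where "e' = e - s0 *\<^sub>R \<nu>"
  define v' where "v' = v - \<sigma> *\<^sub>R \<nu>"
  have e'e': "e' \<bullet> e' = E"
    by (simp add: e'_def E_def inner_diff_left inner_diff_right nn s0_def inner_commute power2_eq_square)
  have v'v': "v' \<bullet> v' = V"
    by (simp add: v'_def V_def inner_diff_left inner_diff_right nn \<sigma>_def inner_commute power2_eq_square)
  have e'v': "e' \<bullet> v' = P"
    by (simp add: e'_def v'_def P_def inner_diff_left inner_diff_right nn s0_def \<sigma>_def inner_commute algebra_simps)
  have E0: "E \<ge> 0" using e'e' by (metis inner_ge_zero)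
  have V0: "V \<ge> 0" using v'v' by (metis inner_ge_zero)
  have PEV: "P^2 \<le> E * V"
    using Cauchy_Schwarz_ineq[of e' v'] e'e' v'v' e'v' by simp
  have Ed: "E \<le> d^2"
  proof -
    have "e \<bullet> e \<le> d^2" using ed by (simp add: power2_norm_eq_inner[symmetric] power_mono)
    moreover have "s0^2 \<ge> 0" by simp
    ultimately show ?thesis unfolding E_def by linarith
  qed
  note key = barrier_ineq[OF sp a d E0 Ed V0 PEV R2, of \<sigma>]
  have lhs: "lam * (a * (a - 1) * (v \<bullet> \<nu>)^2 * (e \<bullet> \<nu>) powr (a - 2) * (e \<bullet> e - (e \<bullet> \<nu>)^2 - R2)
        + 2 * a * (v \<bullet> \<nu>) * (e \<bullet> \<nu>) powr (a - 1) * (2 * (e \<bullet> v) - 2 * (e \<bullet> \<nu>) * (v \<bullet> \<nu>))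
        + (e \<bullet> \<nu>) powr a * (2 * (v \<bullet> v) - 2 * (v \<bullet> \<nu>)^2))
     = (lam * X) * (a * (a - 1) * \<sigma>^2 * (E - R2) / s0^2 + 4 * a * \<sigma> * P / s0 + 2 * V)"
    using sp unfolding s0_def[symmetric] \<sigma>_def[symmetric] p1 p2 X_def[symmetric]
    by (simp add: E_def P_def V_def field_simps power2_eq_square)
  have rhs: "(lam * (e \<bullet> \<nu>) powr a) * ((norm v)^2 - (\<nu> \<bullet> v)^2) + (lam * (a * (1 - a) * d^2) * (e \<bullet> \<nu>) powr (a - 2)) * (\<nu> \<bullet> v)^2
     = (lam * X) * (V + a * (1 - a) * d^2 * \<sigma>^2 / s0^2)"
    using sp unfolding s0_def[symmetric] p2 X_def[symmetric] power2_norm_eq_inner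
    by (simp add: V_def \<sigma>_def inner_commute power2_norm_eq_inner field_simps power2_eq_square)
  show ?thesis unfolding lhs rhs
    using key Xp lam by (intro mult_left_mono) auto
qed


lemma step_bound:
  fixes q d \<beta>0 a :: real
  assumes card: "CARD('n::finite) \<ge> 2" and q: "q > 0" and b0: "\<beta>0 \<ge> 0" and a: "0 < a" "a < 1"
    and ex: "real CARD('n) * a - 2 \<le> q * \<beta>0"
    and IH: "\<exists>C0\<ge>0. \<forall>(\<Omega> :: (real^'n) set) u. adm q d \<Omega> u \<longrightarrow> (\<forall>y\<in>\<Omega>. \<bar>u y\<bar> \<le> C0 * infdist y (frontier \<Omega>) powr \<beta>0)"
  shows "\<exists>C1\<ge>0. \<forall>(\<Omega> :: (real^'n) set) u. adm q d \<Omega> u \<longrightarrow> (\<forall>x\<in>\<Omega>. \<bar>u x\<bar> \<le> C1 * infdist x (frontier \<Omega>) powr a)"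
proof -
  obtain C0 where C0: "C0 \<ge> 0" and IH0: "\<And>(\<Omega> :: (real^'n) set) u y. adm q d \<Omega> u \<Longrightarrow> y \<in> \<Omega> \<Longrightarrow> \<bar>u y\<bar> \<le> C0 * infdist y (frontier \<Omega>) powr \<beta>0"
    using IH by blast
  define N where "N = real CARD('n)"
  define R2 where "R2 = d^2 * (2 + 4 * a / (1 - a))"
  define K where "K = a * (1 - a) * d^2"
  define \<gamma> where "\<gamma> = q * \<beta>0 - (N * a - 2)"
  define lam where "lam = 1 + C0 powr q * d powr \<gamma> / K"
  have K0: "K \<ge> 0" using a by (simp add: K_def)
  have lam1: "lam \<ge> 1" using K0 by (simp add: lam_def)
  have R20: "R2 \<ge> 0" using a by (simp add: R2_def)
  have g0: "\<gamma> \<ge> 0" using ex by (simp add: \<gamma>_def N_def)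
  show ?thesis
  proof (intro exI[of _ "lam * R2"] conjI allI impI ballI)
    show "0 \<le> lam * R2" using lam1 R20 by simp
    fix \<Omega> :: "(real^'n) set" and u x
    assume adm: "adm q d \<Omega> u" and x: "x \<in> \<Omega>"
    note ab = adm_basic[OF adm]
    have d: "d > 0" using adm_dpos[OF adm] .
    have Kp: "K > 0" using a d by (simp add: K_def)
    have R2d: "R2 \<ge> d^2"
    proof -
      have "4 * a / (1 - a) \<ge> 0" using a by simp
      then have "2 + 4 * a / (1 - a) \<ge> 1" by linarith
      then show ?thesis unfolding R2_def using mult_left_mono[of 1 _ "d^2"] by simp
    qed
    define D where "D = infdist x (frontier \<Omega>)"
    obtain p where p: "p \<in> frontier \<Omega>" and Dp: "D = dist x p" using adm_near[OF adm] unfolding D_def by blast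
    have pcl: "p \<in> closure \<Omega>" using p adm_frontier(3)[OF adm] by blast
    obtain \<nu> where nu: "norm \<nu> = 1" and pos: "\<forall>y\<in>\<Omega>. (y - p) \<bullet> \<nu> > 0"
      using support_normal[OF ab(3) ab(1) ab(4) p] by blast
    define w where "w = barrier lam a R2 p \<nu>"
    have cl_nonneg: "(z - p) \<bullet> \<nu> \<ge> 0" if "z \<in> closure \<Omega>" for z
    proof -
      have "closure \<Omega> \<subseteq> {z. 0 \<le> (z - p) \<bullet> \<nu>}"
      proof (rule closure_minimal)
        show "\<Omega> \<subseteq> {z. 0 \<le> (z - p) \<bullet> \<nu>}" using pos by (auto intro: less_imp_le)
        have "{z. 0 \<le> (z - p) \<bullet> \<nu>} = {z. inner \<nu> z \<ge> inner \<nu> p}"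
          by (auto simp: inner_commute[of _ \<nu>] inner_diff_right)
        then show "closed {z. 0 \<le> (z - p) \<bullet> \<nu>}" by (simp add: closed_halfspace_ge)
      qed
      then show ?thesis using that by blast
    qed
    have sle: "(z - p) \<bullet> \<nu> \<le> norm (z - p)" for z
      using Cauchy_Schwarz_ineq2[of "z - p" \<nu>] nu by simp
    have cmp: "w z \<le> u z" if z: "z \<in> \<Omega>" for z
    proof (rule comparison[OF card ab(1) ab(2) ab(6) ab(7) _ _ _ z])
      show "continuous_on (closure \<Omega>) w"
        unfolding w_def barrier_def
        by (intro continuous_intros continuous_on_powr') (use cl_nonneg a in auto)
    next
      fix z assume z: "z \<in> frontier \<Omega>"
      have zc: "z \<in> closure \<Omega>" using z adm_frontier(3)[OF adm] by blast
      have "dist z p \<le> d" using adm_dist[OF adm zc pcl] .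
      then have "(norm (z - p))^2 \<le> d^2" by (simp add: dist_norm power_mono)
      then have "(norm (z - p))^2 - ((z - p) \<bullet> \<nu>)^2 - R2 \<le> 0" using R2d by (smt (verit) zero_le_power2)
      then have "w z \<le> 0" unfolding w_def barrier_def using lam1 cl_nonneg[OF zc]
        by (intro mult_nonneg_nonpos) (auto intro!: mult_nonneg_nonpos)
      then show "w z \<le> u z" using ab(10)[OF z] by simp
    next
      fix z assume z: "z \<in> \<Omega>"
      define s0 where "s0 = (z - p) \<bullet> \<nu>"
      have s0p: "s0 > 0" using pos z by (simp add: s0_def)
      have s0d: "s0 \<le> d"
        using sle[of z] adm_dist[OF adm _ pcl, of z] z closure_subset by (force simp: s0_def dist_norm)
      define c1 where "c1 = lam * s0 powr a"
      define c2 where "c2 = lam * K * s0 powr (a - 2)"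
      have c1p: "c1 > 0" using lam1 s0p by (simp add: c1_def)
      have c2p: "c2 > 0" using lam1 s0p Kp by (simp add: c2_def)
      have prod: "c1 ^ (CARD('n) - 1) * c2 = lam ^ CARD('n) * K * s0 powr (N * a - 2)"
      proof -
        have n1: "real (CARD('n) - 1) = N - 1" using card by (simp add: N_def of_nat_diff)
        have "c1 ^ (CARD('n) - 1) = lam ^ (CARD('n) - 1) * s0 powr ((N - 1) * a)"
          using s0p unfolding c1_def by (simp add: power_mult_distrib powr_power n1 N_def)
        moreover have "s0 powr ((N - 1) * a) * s0 powr (a - 2) = s0 powr (N * a - 2)"
          by (simp add: powr_add[symmetric] algebra_simps)
        moreover have "lam ^ (CARD('n) - 1) * lam = lam ^ CARD('n)"
          using card by (metis One_nat_def Suc_pred less_le_trans pos2 power_Suc2 zero_less_card_finite)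
        ultimately show ?thesis unfolding c2_def by (metis (no_types, lifting) mult.assoc mult.commute)
      qed
      have "\<bar>u z\<bar> powr q < c1 ^ (CARD('n) - 1) * c2"
      proof -
        have "\<bar>u z\<bar> \<le> C0 * infdist z (frontier \<Omega>) powr \<beta>0" by (rule IH0[OF adm z])
        also have "\<dots> \<le> C0 * s0 powr \<beta>0"
          using infdist_le_s[OF nu pos z] b0 C0 by (auto simp: s0_def intro!: mult_left_mono powr_mono2 infdist_nonneg)
        finally have u1: "\<bar>u z\<bar> \<le> C0 * s0 powr \<beta>0" .
        have "\<bar>u z\<bar> powr q \<le> (C0 * s0 powr \<beta>0) powr q" using u1 q by (intro powr_mono2) auto
        also have "\<dots> = C0 powr q * s0 powr (q * \<beta>0)" by (simp add: powr_mult powr_powr mult.commute)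
        also have "s0 powr (q * \<beta>0) = s0 powr (N * a - 2) * s0 powr \<gamma>"
          by (simp add: \<gamma>_def powr_add[symmetric])
        also have "C0 powr q * (s0 powr (N * a - 2) * s0 powr \<gamma>) \<le> C0 powr q * (s0 powr (N * a - 2) * d powr \<gamma>)"
          using s0p s0d g0 by (intro mult_left_mono powr_mono2) auto
        also have "\<dots> = (lam - 1) * K * s0 powr (N * a - 2)"
          using Kp by (simp add: lam_def)
        also have "\<dots> < lam ^ CARD('n) * K * s0 powr (N * a - 2)"
        proof -
          have "lam \<le> lam ^ CARD('n)" using lam1 by (intro self_le_power) auto
          then have "lam - 1 < lam ^ CARD('n)" by linarith
          then show ?thesis using Kp s0p by (intro mult_strict_right_mono) auto
        qed
        finally show ?thesis using prod by simp
      qed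
      moreover have "\<forall>v. \<exists>W2. line2 w z v W2 \<and> W2 \<ge> c1 * ((norm v)^2 - (\<nu> \<bullet> v)^2) + c2 * (\<nu> \<bullet> v)^2"
      proof
        fix v :: "real^'n"
        have ed: "norm (z - p) \<le> d" using adm_dist[OF adm _ pcl, of z] z closure_subset by (force simp: dist_norm)
        have "(z - p) \<bullet> \<nu> > 0" using s0p by (simp add: s0_def)
        from barrier_W2_bound[OF nu this ed d a _ R2_def, of lam v] lam1
        show "\<exists>W2. line2 w z v W2 \<and> W2 \<ge> c1 * ((norm v)^2 - (\<nu> \<bullet> v)^2) + c2 * (\<nu> \<bullet> v)^2"
          using barrier_line[OF \<open>(z - p) \<bullet> \<nu> > 0\<close>, of lam a R2 v]
          unfolding w_def c1_def c2_def s0_def K_def by (intro exI) auto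
      qed
      ultimately show "\<exists>c1 c2 \<nu>. c1 > 0 \<and> c2 > 0 \<and> norm \<nu> = 1 \<and>
        c1^(CARD('n) - 1) * c2 > det (hessian u z) \<and>
        (\<forall>v. \<exists>W2. line2 w z v W2 \<and> W2 \<ge> c1 * ((norm v)^2 - (\<nu> \<bullet> v)^2) + c2 * (\<nu> \<bullet> v)^2)"
        using c1p c2p nu ab(9)[OF z] by auto
    qed
    have sx: "(x - p) \<bullet> \<nu> > 0" using pos x by simp
    have sxD: "(x - p) \<bullet> \<nu> \<le> D" using sle[of x] Dp by (simp add: dist_norm)
    have "w x \<ge> - (lam * R2 * D powr a)"
    proof -
      have "(norm (x - p))^2 - ((x - p) \<bullet> \<nu>)^2 \<ge> 0"
        using sle[of x] sx by (simp add: power_mono)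
      then have "(norm (x - p))^2 - ((x - p) \<bullet> \<nu>)^2 - R2 \<ge> - R2" by simp
      moreover have "((x - p) \<bullet> \<nu>) powr a \<le> D powr a" using sx sxD a by (intro powr_mono2) auto
      ultimately have "((x - p) \<bullet> \<nu>) powr a * ((norm (x - p))^2 - ((x - p) \<bullet> \<nu>)^2 - R2) \<ge> D powr a * (- R2)"
        using R20 by (smt (verit, ccfv_SIG) mult_left_mono mult_right_mono_neg powr_ge_zero)
      then have "w x \<ge> lam * (D powr a * (- R2))" unfolding w_def barrier_def using lam1 by (intro mult_left_mono) auto
      then show ?thesis by (simp add: algebra_simps)
    qed
    moreover have "u x \<le> 0" using adm_nonpos[OF adm] x closure_subset by blast
    ultimately show "\<bar>u x\<bar> \<le> lam * R2 * infdist x (frontier \<Omega>) powr a"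
      using cmp[OF x] by (simp add: D_def)
  qed
qed




lemma holder_one_side:
  fixes \<Omega> :: "(real^'n::finite) set"
  assumes adm: "adm q d \<Omega> u" and C: "C \<ge> 0" and b: "0 < \<beta>" "\<beta> \<le> 1"
    and bnd: "\<And>x. x \<in> \<Omega> \<Longrightarrow> \<bar>u x\<bar> \<le> C * infdist x (frontier \<Omega>) powr \<beta>"
    and x: "x \<in> closure \<Omega>" and y: "y \<in> closure \<Omega>"
  shows "u y - u x \<le> C * dist x y powr \<beta>"
proof -
  note ab = adm_basic[OF adm]
  have uy: "u y \<le> 0" using adm_nonpos[OF adm y] .
  show ?thesis
  proof (cases "x \<in> frontier \<Omega>")
    case True
    then show ?thesis using ab(10) uy C by (simp add: order_trans[OF _ mult_nonneg_nonneg])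
  next
    case False
    then have xO: "x \<in> \<Omega>" using open_closure_frontier[OF ab(1) x] by simp
    show ?thesis
    proof (cases "y = x")
      case True then show ?thesis using C by simp
    next
      case yx: False
      have "\<exists>\<tau>\<ge>1. x + \<tau> *\<^sub>R (y - x) \<in> frontier \<Omega>"
      proof (cases "y \<in> frontier \<Omega>")
        case True then show ?thesis by (intro exI[of _ 1]) auto
      next
        case False
        then have yO: "y \<in> \<Omega>" using open_closure_frontier[OF ab(1) y] by simp
        have "y - x \<noteq> 0" using yx by simp
        from exit_point[OF ab(2) ab(1) yO this] obtain \<tau> where "\<tau> > 0" "y + \<tau> *\<^sub>R (y - x) \<in> frontier \<Omega>" by blast
        moreover have "y + \<tau> *\<^sub>R (y - x) = x + (1 + \<tau>) *\<^sub>R (y - x)" by (simp add: algebra_simps)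
        ultimately show ?thesis by (intro exI[of _ "1 + \<tau>"]) auto
      qed
      then obtain \<tau> where t: "\<tau> \<ge> 1" and zf: "x + \<tau> *\<^sub>R (y - x) \<in> frontier \<Omega>" by blast
      define z where "z = x + \<tau> *\<^sub>R (y - x)"
      have zc: "z \<in> closure \<Omega>" using zf adm_frontier(3)[OF adm] by (auto simp: z_def)
      have yeq: "y = (1 - 1 / \<tau>) *\<^sub>R x + (1 / \<tau>) *\<^sub>R z"
        using t by (simp add: z_def algebra_simps)
      have "u y \<le> (1 - 1 / \<tau>) * u x + (1 / \<tau>) * u z"
        using convex_onD[OF adm_cvx_cl[OF adm], of "1 / \<tau>" x z] t x zc yeq by simp
      then have h1: "u y - u x \<le> \<bar>u x\<bar> / \<tau>"
        using ab(10) zf adm_nonpos[OF adm x] by (simp add: z_def field_simps)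
      have h2: "u y - u x \<le> \<bar>u x\<bar>" using uy by simp
      define D where "D = infdist x (frontier \<Omega>)"
      define r where "r = dist x y"
      have Dp: "D > 0" using adm_infdist_pos[OF adm xO] by (simp add: D_def)
      have rp: "r > 0" using yx by (simp add: r_def)
      have Dz: "D \<le> \<tau> * r"
      proof -
        have "D \<le> dist x z" unfolding D_def z_def using zf by (rule infdist_le)
        also have "dist x z = \<tau> * r" using t by (simp add: z_def r_def dist_norm norm_minus_commute)
        finally show ?thesis .
      qed
      have ux: "\<bar>u x\<bar> \<le> C * D powr \<beta>" using bnd[OF xO] by (simp add: D_def)
      show ?thesis
      proof (cases "r \<ge> D")
        case True
        have "C * D powr \<beta> \<le> C * r powr \<beta>" using True Dp b C by (intro mult_left_mono powr_mono2) auto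
        then show ?thesis using h2 ux by (simp add: r_def)
      next
        case False
        have "\<bar>u x\<bar> / \<tau> \<le> \<bar>u x\<bar> * (r / D)"
        proof -
          have "1 / \<tau> \<le> r / D" using Dz Dp rp t by (simp add: field_simps)
          then show ?thesis by (metis abs_ge_zero divide_inverse mult_left_mono mult_1 inverse_eq_divide)
        qed
        also have "\<dots> \<le> C * D powr \<beta> * (r / D)" using ux rp Dp by (intro mult_right_mono) auto
        also have "C * D powr \<beta> * (r / D) = C * r * D powr (\<beta> - 1)"
          using Dp by (simp add: powr_diff)
        also have "\<dots> \<le> C * r * r powr (\<beta> - 1)"
          using False rp b C by (intro mult_left_mono powr_mono2') auto
        also have "C * r * r powr (\<beta> - 1) = C * r powr \<beta>"
          using rp by (simp add: powr_diff)
        finally show ?thesis using h1 by (simp add: r_def)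
      qed
    qed
  qed
qed

lemma holder_from_bound:
  fixes \<Omega> :: "(real^'n::finite) set"
  assumes adm: "adm q d \<Omega> u" and C: "C \<ge> 0" and b: "0 < \<beta>" "\<beta> \<le> 1"
    and bnd: "\<And>x. x \<in> \<Omega> \<Longrightarrow> \<bar>u x\<bar> \<le> C * infdist x (frontier \<Omega>) powr \<beta>"
  shows "holder_space \<beta> (closure \<Omega>) u"
  unfolding holder_space_def
proof (intro conjI exI ballI)
  note ab = adm_basic[OF adm]
  show "bounded (u ` closure \<Omega>)"
    using ab(2,7) by (intro compact_imp_bounded compact_continuous_image) (auto simp: compact_closure)
  fix x y assume x: "x \<in> closure \<Omega>" and y: "y \<in> closure \<Omega>"
  have "u y - u x \<le> C * dist x y powr \<beta>" by (rule holder_one_side[OF adm C b bnd x y])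
  moreover have "u x - u y \<le> C * dist y x powr \<beta>" by (rule holder_one_side[OF adm C b bnd y x])
  ultimately show "\<bar>u x - u y\<bar> \<le> C * dist x y powr \<beta>" by (simp add: dist_commute)
qed




theorem proposition1p3:
  fixes q \<beta> d :: real
  assumes "CARD('n::finite) \<ge> 3"
    and "0 < q" and "q < real CARD('n) - 2"
    and "0 < \<beta>" and "\<beta> < 2 / (real CARD('n) - q)"
  shows "\<exists>C. \<forall>(\<Omega> :: (real^'n) set) (u :: real^'n \<Rightarrow> real).
           (open \<Omega> \<and> bounded \<Omega> \<and> convex \<Omega> \<and> \<Omega> \<noteq> {} \<and> diameter \<Omega> = d \<and>
            smooth_on \<Omega> u \<and> continuous_on (closure \<Omega>) u \<and> convex_on \<Omega> u \<and>
            (\<exists>x\<in>\<Omega>. u x \<noteq> 0) \<and>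
            (\<forall>x\<in>\<Omega>. det (hessian u x) = \<bar>u x\<bar> powr q) \<and>
            (\<forall>x\<in>frontier \<Omega>. u x = 0))
           \<longrightarrow> holder_space \<beta> (closure \<Omega>) u \<and>
               (\<forall>x\<in>\<Omega>. \<bar>u x\<bar> \<le> C * (infdist x (frontier \<Omega>)) powr \<beta>)"
proof -
  define N where "N = real CARD('n)"
  have card: "CARD('n) \<ge> 2" using assms(1) by simp
  have q: "q > 0" "q < N" using assms(2,3) by (auto simp: N_def)
  have Nq: "N - q > 2" using assms(3) by (simp add: N_def)
  have b: "\<beta> > 0" "\<beta> < 2 / (N - q)" using assms(4,5) by (auto simp: N_def)
  have b1: "\<beta> < 1"
  proof -
    have "2 / (N - q) < 1" using Nq by simp
    then show ?thesis using b by linarith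
  qed
  have bN: "(N - q) * \<beta> < 2" using b Nq by (simp add: field_simps)
  have Npos: "N > 0" using q by linarith
  define \<delta> where "\<delta> = (2 - (N - q) * \<beta>) / N"
  have dp: "\<delta> > 0" using bN Npos by (simp add: \<delta>_def)
  define P where "P = (\<lambda>b. \<exists>C\<ge>0. \<forall>(\<Omega> :: (real^'n) set) u. adm q d \<Omega> u \<longrightarrow> (\<forall>y\<in>\<Omega>. \<bar>u y\<bar> \<le> C * infdist y (frontier \<Omega>) powr b))"
  have Pk: "P (min \<beta> (real k * \<delta>))" for k
  proof (induction k)
    case 0
    obtain M where M: "M \<ge> 0" "\<And>(\<Omega> :: (real^'n) set) u y. adm q d \<Omega> u \<Longrightarrow> y \<in> closure \<Omega> \<Longrightarrow> \<bar>u y\<bar> \<le> M"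
      using base_bound[OF card assms(2)] assms(3) by force
    have "min \<beta> (real 0 * \<delta>) = 0" using b by simp
    moreover have "P 0" unfolding P_def
    proof (intro exI[of _ M] conjI allI impI ballI)
      fix \<Omega> :: "(real^'n) set" and u y assume a: "adm q d \<Omega> u" and y: "y \<in> \<Omega>"
      have "infdist y (frontier \<Omega>) \<noteq> 0" using adm_infdist_pos[OF a y] by simp
      then show "\<bar>u y\<bar> \<le> M * infdist y (frontier \<Omega>) powr 0" using M(2)[OF a] y closure_subset by auto
    qed (use M in auto)
    ultimately show ?case by simp
  next
    case (Suc k)
    define b0 where "b0 = min \<beta> (real k * \<delta>)"
    define a where "a = min \<beta> (real (Suc k) * \<delta>)"
    have b00: "b0 \<ge> 0" using b dp by (simp add: b0_def)
    have a0: "a > 0" using b dp by (simp add: a_def)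
    have a1: "a < 1" using b1 by (simp add: a_def)
    have ab0: "a \<le> b0 + \<delta>"
    proof (cases "\<beta> \<le> real k * \<delta>")
      case True
      then have "b0 = \<beta>" by (simp add: b0_def)
      moreover have "a \<le> \<beta>" by (simp add: a_def)
      ultimately show ?thesis using dp by linarith
    next
      case False
      then have "b0 = real k * \<delta>" by (simp add: b0_def)
      moreover have "a \<le> real (Suc k) * \<delta>" by (simp add: a_def)
      ultimately show ?thesis by (simp add: algebra_simps)
    qed
    have b0b: "b0 \<le> \<beta>" by (simp add: b0_def)
    have "real CARD('n) * a - 2 \<le> q * b0"
    proof -
      have "N * a \<le> N * (b0 + \<delta>)" using ab0 Npos by simp
      also have "N * (b0 + \<delta>) = N * b0 + 2 - (N - q) * \<beta>" using Npos by (simp add: \<delta>_def field_simps)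
      also have "\<dots> \<le> N * b0 + 2 - (N - q) * b0" using b0b Nq by (simp add: mult_left_mono)
      finally show ?thesis by (simp add: N_def algebra_simps)
    qed
    from step_bound[OF card assms(2) b00 a0 a1 this] Suc.IH show ?case
      unfolding P_def a_def b0_def by blast
  qed
  obtain k :: nat where k: "\<beta> / \<delta> \<le> real k" using real_arch_simple by blast
  then have "\<beta> \<le> real k * \<delta>" using dp by (simp add: field_simps)
  then have "min \<beta> (real k * \<delta>) = \<beta>" by simp
  with Pk[of k] obtain C where C: "C \<ge> 0"
    and bnd: "\<And>(\<Omega> :: (real^'n) set) u y. adm q d \<Omega> u \<Longrightarrow> y \<in> \<Omega> \<Longrightarrow> \<bar>u y\<bar> \<le> C * infdist y (frontier \<Omega>) powr \<beta>"
    unfolding P_def by auto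
  show ?thesis
  proof (intro exI[of _ C] allI impI)
    fix \<Omega> :: "(real^'n) set" and u
    assume H: "open \<Omega> \<and> bounded \<Omega> \<and> convex \<Omega> \<and> \<Omega> \<noteq> {} \<and> diameter \<Omega> = d \<and>
            smooth_on \<Omega> u \<and> continuous_on (closure \<Omega>) u \<and> convex_on \<Omega> u \<and>
            (\<exists>x\<in>\<Omega>. u x \<noteq> 0) \<and>
            (\<forall>x\<in>\<Omega>. det (hessian u x) = \<bar>u x\<bar> powr q) \<and>
            (\<forall>x\<in>frontier \<Omega>. u x = 0)"
    then have a: "adm q d \<Omega> u" unfolding adm_def .
    show "holder_space \<beta> (closure \<Omega>) u \<and> (\<forall>x\<in>\<Omega>. \<bar>u x\<bar> \<le> C * (infdist x (frontier \<Omega>)) powr \<beta>)"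
      using holder_from_bound[OF a C b(1) _ bnd[OF a]] b1 bnd[OF a] by auto
  qed
qed


end
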